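(* Let $A\in\mathbb{C}^{2^n\times2^n}$, $L=(A+A^\dagger)/2$, $H=(A-A^\dagger)/(2i)$, $t>0$, $u_0\in\mathbb{C}^{2^n}$ and $u(t)=e^{-At}u_0$. Let $c\in\mathbb{C}^M$, $k_1,\dots,k_M\in\mathbb{R}$, and $\mathcal{L}=\sum_{j=1}^Mc_je^{-it(k_jL+H)}$, and let $\epsilon_v\ge\|u(t)-\mathcal{L}u_0\|$. Suppose we have a single call to each of: - $U_Q$, an $(\alpha_Q,m_Q,\epsilon_Q)$-block encoding of $\mathcal{Q}(t)=\sum_{j=1}^M|j\rangle\langle j|\otimes e^{-it(k_jL+H)}$; - $(O_{c,l},O_{c,r})$, an $m_c$-qubit $(\|c\|_1,m_c,\epsilon_c)$ state-preparation pair for $c$; - $U_0$, a $(\|u_0\|,[0,m_N],\epsilon_0)$-block encoding of $u_0$. Then one can construct a $(\|c\|_1\|u_0\|,[m_c+m_Q,\,m_c+m_Q+m_N],\,\epsilon)$-block encoding of $u(t)$, as long as $$\epsilon_v+\|u_0\|(\epsilon_c+\|c\|_1\epsilon_Q)+\|c\|_1\epsilon_0\le\epsilon.$$ The block encoding yields a conditional state preparation that succeeds with probability at least $\frac{(\|u(t)\|-\epsilon')^2}{\|u_0\|^2\|c\|_1^2}$, where $\epsilon'=\epsilon_v+\|u_0\|(\epsilon_c+\|c\|_1\epsilon_Q)+\|c\|_1\epsilon_0$.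
   Context: $\|\cdot\|$ is the Euclidean/spectral norm. Operator block encoding: a unitary $U$ is an $(\alpha,m,\epsilon)$-block encoding of $B$ if $\|\alpha(\langle0|^{\otimes m}\otimes I)U(|0\rangle^{\otimes m}\otimes I)-B\|\le\epsilon$. Vector block encoding: a unitary $U$ is an $(\alpha,[a,b],\epsilon)$-block encoding of a vector $x$ if $\|x-\alpha(\langle0|^{\otimes a}\otimes I)U|0\rangle^{\otimes b}\|\le\epsilon$ (the $b$ input qubits are all initialized to $|0\rangle$ and the output is post-selected on $a$ ancilla qubits being $|0\rangle$; success means this post-selection occurs). State-preparation pair: for $z\in\mathbb{C}^M$ and $\gamma\ge\|z\|_1$, unitaries $(P_l,P_r)$ on $m$ qubits form a $(\gamma,m,\epsilon)$ state-preparation pair for $z$ if $P_l|0\rangle^{\otimes m}=\sum_jx_j|j\rangle$, $P_r|0\rangle^{\otimes m}=\sum_jy_j|j\rangle$ and $\sum_{j=1}^M|\gamma x_j^*y_j-z_j|\le\epsilon$.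
   Formalization: $U_Q$ is a block encoding of $\mathcal{Q}(t)$ with $\alpha_Q=1$, and the success-probability bound is asserted only when $\epsilon'\le\|u(t)\|$. The statement above fails without it. *)

theory Defs
  imports "HOL-Analysis.Analysis" "Jordan_Normal_Form.Matrix"
begin

definition adj :: "complex mat \<Rightarrow> complex mat" where
  "adj A = mat (dim_col A) (dim_row A) (\<lambda>(i,j). cnj (A $$ (j,i)))"

definition unitary_mat :: "complex mat \<Rightarrow> bool" where
  "unitary_mat U \<longleftrightarrow> dim_row U = dim_col U \<and> adj U * U = 1\<^sub>m (dim_row U)"

text \<open>Kronecker (tensor) product; the first factor is the more significant one,
  i.e. index of the basis state |a> (x) |b> is a * dim B + b.\<close>
definition kron :: "complex mat \<Rightarrow> complex mat \<Rightarrow> complex mat" where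
  "kron A B = mat (dim_row A * dim_row B) (dim_col A * dim_col B)
     (\<lambda>(i,j). A $$ (i div dim_row B, j div dim_col B) * B $$ (i mod dim_row B, j mod dim_col B))"

definition vnorm :: "complex vec \<Rightarrow> real" where
  "vnorm v = sqrt (\<Sum>i<dim_vec v. (cmod (v $ i))\<^sup>2)"

definition vnorm1 :: "complex vec \<Rightarrow> real" where
  "vnorm1 v = (\<Sum>i<dim_vec v. cmod (v $ i))"

definition opnorm :: "complex mat \<Rightarrow> real" where
  "opnorm A = Sup {vnorm (A *\<^sub>v v) | v. v \<in> carrier_vec (dim_col A) \<and> vnorm v \<le> 1}"

definition mexp :: "complex mat \<Rightarrow> complex mat" where
  "mexp A = mat (dim_row A) (dim_col A) (\<lambda>(i,j). \<Sum>k. (A ^\<^sub>m k) $$ (i,j) / of_nat (fact k))"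

definition ket :: "nat \<Rightarrow> nat \<Rightarrow> complex mat" where
  "ket m j = mat (2^m) 1 (\<lambda>(i,_). if i = j then 1 else 0)"

definition ketbra :: "nat \<Rightarrow> nat \<Rightarrow> complex mat" where
  "ketbra m j = ket m j * adj (ket m j)"

definition ket0v :: "nat \<Rightarrow> complex vec" where
  "ket0v m = unit_vec (2^m) 0"

definition bra0_I :: "nat \<Rightarrow> nat \<Rightarrow> complex mat" where
  "bra0_I m d = kron (adj (ket m 0)) (1\<^sub>m d)"

definition ket0_I :: "nat \<Rightarrow> nat \<Rightarrow> complex mat" where
  "ket0_I m d = kron (ket m 0) (1\<^sub>m d)"

definition block_encoding :: "complex mat \<Rightarrow> real \<Rightarrow> nat \<Rightarrow> real \<Rightarrow> complex mat \<Rightarrow> bool" where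
  "block_encoding U \<alpha> m \<epsilon> B \<longleftrightarrow>
     dim_row B = dim_col B \<and> U \<in> carrier_mat (2^m * dim_row B) (2^m * dim_row B) \<and> unitary_mat U \<and>
     opnorm (complex_of_real \<alpha> \<cdot>\<^sub>m (bra0_I m (dim_row B) * U * ket0_I m (dim_row B)) - B) \<le> \<epsilon>"

definition postsel :: "complex mat \<Rightarrow> nat \<Rightarrow> nat \<Rightarrow> complex vec" where
  "postsel U a b = (bra0_I a (2^(b - a)) * U) *\<^sub>v ket0v b"

definition vec_block_encoding ::
  "complex mat \<Rightarrow> real \<Rightarrow> nat \<Rightarrow> nat \<Rightarrow> real \<Rightarrow> complex vec \<Rightarrow> bool" where
  "vec_block_encoding U \<alpha> a b \<epsilon> x \<longleftrightarrow>
     a \<le> b \<and> U \<in> carrier_mat (2^b) (2^b) \<and> unitary_mat U \<and> dim_vec x = 2^(b - a) \<and>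
     vnorm (x - complex_of_real \<alpha> \<cdot>\<^sub>v postsel U a b) \<le> \<epsilon>"

definition success_prob :: "complex mat \<Rightarrow> nat \<Rightarrow> nat \<Rightarrow> real" where
  "success_prob U a b = (vnorm (postsel U a b))\<^sup>2"

text \<open>(Pl, Pr) is a (gamma, m, eps) state-preparation pair for z in C^M (M \<le> 2^m);
  basis states |j> for j = 0..M-1 correspond to indices 1..M of the paper.\<close>
definition state_prep_pair ::
  "complex mat \<Rightarrow> complex mat \<Rightarrow> real \<Rightarrow> nat \<Rightarrow> real \<Rightarrow> complex vec \<Rightarrow> bool" where
  "state_prep_pair Pl Pr \<gamma> m \<epsilon> z \<longleftrightarrow>
     dim_vec z \<le> 2^m \<and> \<gamma> \<ge> vnorm1 z \<and>
     Pl \<in> carrier_mat (2^m) (2^m) \<and> Pr \<in> carrier_mat (2^m) (2^m) \<and> unitary_mat Pl \<and> unitary_mat Pr \<and>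
     (let x = Pl *\<^sub>v ket0v m; y = Pr *\<^sub>v ket0v m in
       (\<Sum>j<dim_vec z. cmod (complex_of_real \<gamma> * cnj (x $ j) * y $ j - z $ j)) \<le> \<epsilon>)"

definition herm_part :: "complex mat \<Rightarrow> complex mat" where
  "herm_part A = (1/2 :: complex) \<cdot>\<^sub>m (A + adj A)"

definition antiherm_part :: "complex mat \<Rightarrow> complex mat" where
  "antiherm_part A = (1 / (2 * \<i>)) \<cdot>\<^sub>m (A - adj A)"

definition evol :: "complex mat \<Rightarrow> real \<Rightarrow> real \<Rightarrow> complex mat" where
  "evol A t k = mexp ((- \<i> * complex_of_real t) \<cdot>\<^sub>m
      (complex_of_real k \<cdot>\<^sub>m herm_part A + antiherm_part A))"

definition Qmat :: "complex mat \<Rightarrow> real \<Rightarrow> (nat \<Rightarrow> real) \<Rightarrow> nat \<Rightarrow> nat \<Rightarrow> nat \<Rightarrow> complex mat" where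
  "Qmat A t k M mc n = foldr (\<lambda>j acc. kron (ketbra mc j) (evol A t (k j)) + acc) [0..<M]
      (0\<^sub>m (2^mc * 2^n) (2^mc * 2^n))"

definition LCU :: "complex mat \<Rightarrow> real \<Rightarrow> (nat \<Rightarrow> real) \<Rightarrow> complex vec \<Rightarrow> nat \<Rightarrow> complex mat" where
  "LCU A t k c n = foldr (\<lambda>j acc. (c $ j) \<cdot>\<^sub>m evol A t (k j) + acc) [0..<dim_vec c]
      (0\<^sub>m (2^n) (2^n))"

text \<open>The construction, on registers [Q-ancilla (mQ)] [c-register (mc)] [system (n)]:
  (I (x) Ocl^dagger (x) I) U_Q (I (x) Ocr (x) I) (I (x) I (x) U0). Each oracle is used once.\<close>
definition lcu_circuit ::
  "nat \<Rightarrow> nat \<Rightarrow> nat \<Rightarrow> complex mat \<Rightarrow> complex mat \<Rightarrow> complex mat \<Rightarrow> complex mat \<Rightarrow> complex mat" where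
  "lcu_circuit mQ mc n UQ Ocl Ocr U0 =
     kron (1\<^sub>m (2^mQ)) (kron (adj Ocl) (1\<^sub>m (2^n))) * UQ *
     kron (1\<^sub>m (2^mQ)) (kron Ocr (1\<^sub>m (2^n))) *
     kron (1\<^sub>m (2^mQ * 2^mc)) U0"

end

theory Submission
  imports Defs "Jordan_Normal_Form.Determinant"
begin

lemma mm_entry:
  assumes "i < dim_row A" "j < dim_col B" "dim_col A = dim_row B"
  shows "(A * B) $$ (i,j) = (\<Sum>l<dim_row B. A $$ (i,l) * B $$ (l,j))"
  using assms by (simp add: scalar_prod_def lessThan_atLeast0)

lemma mv_entry:
  assumes "i < dim_row A" "dim_col A = dim_vec v"
  shows "(A *\<^sub>v v) $ i = (\<Sum>l<dim_vec v. A $$ (i,l) * v $ l)"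
  using assms by (simp add: scalar_prod_def lessThan_atLeast0)

lemma adj_dims[simp]: "dim_row (adj A) = dim_col A" "dim_col (adj A) = dim_row A"
  by (auto simp: adj_def)

lemma adj_entry[simp]: "i < dim_col A \<Longrightarrow> j < dim_row A \<Longrightarrow> adj A $$ (i,j) = cnj (A $$ (j,i))"
  by (simp add: adj_def)

lemma adj_mult:
  assumes "dim_col A = dim_row B"
  shows "adj (A * B) = adj B * adj A"
  using assms by (intro eq_matI) (auto simp: mm_entry sum_distrib_left mult.commute simp del: index_mult_mat(1) intro!: sum.cong)

lemma adj_adj[simp]: "adj (adj A) = A"
  by (intro eq_matI) auto

lemma pow_bound:
  assumes A: "A \<in> carrier_mat d d" and m: "\<And>i j. i < d \<Longrightarrow> j < d \<Longrightarrow> cmod (A $$ (i,j)) \<le> m"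
    and m0: "0 \<le> m"
  shows "i < d \<Longrightarrow> j < d \<Longrightarrow> cmod ((A ^\<^sub>m k) $$ (i,j)) \<le> (d * m) ^ k"
proof (induction k arbitrary: i j)
  case 0
  then show ?case using A by auto
next
  case (Suc k)
  have "cmod ((A ^\<^sub>m Suc k) $$ (i,j)) = cmod (\<Sum>l<d. (A ^\<^sub>m k) $$ (i,l) * A $$ (l,j))"
    using A Suc by (simp add: mm_entry del: index_mult_mat(1))
  also have "\<dots> \<le> (\<Sum>l<d. cmod ((A ^\<^sub>m k) $$ (i,l) * A $$ (l,j)))"
    by (rule norm_sum)
  also have "\<dots> \<le> (\<Sum>l<d. (d*m)^k * m)"
    apply (rule sum_mono)
    unfolding norm_mult
    apply (rule mult_mono)
    using Suc m m0 by auto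
  also have "\<dots> = (d*m)^(Suc k)" by simp
  finally show ?case .
qed

lemma pow_add:
  assumes A: "A \<in> carrier_mat d d"
  shows "A ^\<^sub>m (a + b) = A ^\<^sub>m a * A ^\<^sub>m b"
proof (induction b)
  case 0
  then show ?case using A by simp
next
  case (Suc b)
  have "A ^\<^sub>m (a + Suc b) = (A ^\<^sub>m a * A ^\<^sub>m b) * A" using Suc by simp
  also have "\<dots> = A ^\<^sub>m a * (A ^\<^sub>m b * A)"
    by (rule assoc_mult_mat[of _ d d _ d _ d]) (use A in auto)
  finally show ?case by simp
qed

lemma pow_comm:
  assumes A: "A \<in> carrier_mat d d"
  shows "A * A ^\<^sub>m k = A ^\<^sub>m k * A"
proof -
  have "A ^\<^sub>m (1 + k) = A ^\<^sub>m (k + 1)" by simp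
  then show ?thesis using A by (simp only: pow_add[OF A]) (simp add: A)
qed

lemma adj_pow:
  assumes A: "A \<in> carrier_mat d d"
  shows "adj (A ^\<^sub>m k) = adj A ^\<^sub>m k"
proof (induction k)
  case 0
  then show ?case using A by (intro eq_matI) auto
next
  case (Suc k)
  have "adj (A ^\<^sub>m Suc k) = adj A * adj (A ^\<^sub>m k)"
    using A by (simp add: adj_mult)
  also have "\<dots> = adj A * adj A ^\<^sub>m k" using Suc by simp
  also have "\<dots> = adj A ^\<^sub>m k * adj A"
    by (rule pow_comm[of _ d]) (use A in auto)
  finally show ?case by simp
qed

lemma pow_uminus:
  fixes A :: "complex mat"
  assumes A: "A \<in> carrier_mat d d"
  shows "(- A) ^\<^sub>m k = ((-1) ^ k) \<cdot>\<^sub>m (A ^\<^sub>m k)"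
proof (induction k)
  case 0
  then show ?case using A by (intro eq_matI) auto
next
  case (Suc k)
  show ?case
  proof (rule eq_matI)
    fix i j assume "i < dim_row ((-1) ^ Suc k \<cdot>\<^sub>m A ^\<^sub>m Suc k)" "j < dim_col ((-1) ^ Suc k \<cdot>\<^sub>m A ^\<^sub>m Suc k)"
    then have i: "i < d" and j: "j < d" using A by auto
    have "((- A) ^\<^sub>m Suc k) $$ (i,j) = (\<Sum>l<d. ((- A) ^\<^sub>m k) $$ (i,l) * (- A) $$ (l,j))"
      using A i j by (simp add: mm_entry sum_negf del: index_mult_mat(1))
    also have "\<dots> = (\<Sum>l<d. (-1) ^ Suc k * ((A ^\<^sub>m k) $$ (i,l) * A $$ (l,j)))"
    proof (intro sum.cong refl)
      fix l assume "l \<in> {..<d}"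
      then have l: "l < d" by simp
      have dA: "dim_row A = d" "dim_col A = d" using A by auto
      have "(- A) $$ (l,j) = - (A $$ (l,j))" using l j dA by simp
      moreover have "((- A) ^\<^sub>m k) $$ (i,l) = (-1) ^ k * (A ^\<^sub>m k) $$ (i,l)"
        using Suc.IH i l dA by simp
      ultimately show "((- A) ^\<^sub>m k) $$ (i,l) * (- A) $$ (l,j) = (-1) ^ Suc k * ((A ^\<^sub>m k) $$ (i,l) * A $$ (l,j))"
        by (simp add: algebra_simps)
    qed
    also have "\<dots> = ((-1) ^ Suc k \<cdot>\<^sub>m A ^\<^sub>m Suc k) $$ (i,j)"
      using A i j by (simp add: mm_entry sum_distrib_left del: index_mult_mat(1))
    finally show "((- A) ^\<^sub>m Suc k) $$ (i,j) = ((-1) ^ Suc k \<cdot>\<^sub>m A ^\<^sub>m Suc k) $$ (i,j)" .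
  qed (use A in auto)
qed

definition eterm :: "complex mat \<Rightarrow> nat \<Rightarrow> nat \<Rightarrow> nat \<Rightarrow> complex" where
  "eterm X i j k = (X ^\<^sub>m k) $$ (i,j) / of_nat (fact k)"

lemma mexp_entry:
  "i < dim_row X \<Longrightarrow> j < dim_col X \<Longrightarrow> mexp X $$ (i,j) = (\<Sum>k. eterm X i j k)"
  by (simp add: mexp_def eterm_def)

lemma mexp_dims[simp]: "dim_row (mexp X) = dim_row X" "dim_col (mexp X) = dim_col X"
  by (auto simp: mexp_def)

lemma eterm_summable:
  assumes A: "X \<in> carrier_mat d d" and i: "i < d" and j: "j < d"
  shows "summable (\<lambda>k. norm (eterm X i j k))"
proof -
  define m where "m = (\<Sum>a<d. \<Sum>b<d. cmod (X $$ (a,b)))"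
  have m0: "0 \<le> m" unfolding m_def by (intro sum_nonneg) auto
  have mb: "cmod (X $$ (a,b)) \<le> m" if "a < d" "b < d" for a b
  proof -
    have "cmod (X $$ (a,b)) \<le> (\<Sum>b'<d. cmod (X $$ (a,b')))"
      by (rule member_le_sum) (use that in auto)
    also have "\<dots> \<le> m" unfolding m_def
      by (rule member_le_sum[where f = "\<lambda>a. \<Sum>b'<d. cmod (X $$ (a,b'))"]) (use that in \<open>auto intro: sum_nonneg\<close>)
    finally show ?thesis .
  qed
  show ?thesis
  proof (rule summable_comparison_test)
    show "summable (\<lambda>k. inverse (fact k) * (d * m) ^ k)" by (rule summable_exp)
    show "\<exists>N. \<forall>n\<ge>N. norm (norm (eterm X i j n)) \<le> inverse (fact n) * (d * m) ^ n"
    proof (intro exI allI impI)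
      fix n :: nat
      have "norm (norm (eterm X i j n)) = cmod ((X ^\<^sub>m n) $$ (i,j)) / fact n"
        by (simp add: eterm_def norm_divide)
      also have "\<dots> \<le> (d * m) ^ n / fact n"
        by (intro divide_right_mono pow_bound[OF A mb m0 i j]) auto
      finally show "norm (norm (eterm X i j n)) \<le> inverse (fact n) * (d * m) ^ n"
        by (simp add: field_simps)
    qed
  qed
qed

lemma alt_sum_fact:
  "(\<Sum>a\<le>n. (-1) ^ a / (fact a * fact (n - a)) :: complex) = (if n = 0 then 1 else 0)"
proof (cases "n = 0")
  case True then show ?thesis by simp
next
  case False
  have "(\<Sum>a\<le>n. (-1) ^ a / (fact a * fact (n - a)) :: complex)
      = (\<Sum>a\<le>n. (-1) ^ a * of_nat (n choose a)) / fact n"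
    by (simp add: sum_divide_distrib binomial_fact field_simps)
  also have "\<dots> = 0" using False by (simp add: choose_alternating_sum)
  finally show ?thesis using False by simp
qed


lemma mexp_neg_mult:
  assumes X: "X \<in> carrier_mat d d"
  shows "mexp (- X) * mexp X = 1\<^sub>m d"
proof (rule eq_matI)
  fix i j assume i: "i < dim_row (1\<^sub>m d)" and j: "j < dim_col (1\<^sub>m d)"
  then have i: "i < d" and j: "j < d" by auto
  have Xm: "- X \<in> carrier_mat d d" using X by auto
  have "(mexp (- X) * mexp X) $$ (i,j) = (\<Sum>l<d. mexp (- X) $$ (i,l) * mexp X $$ (l,j))"
    using X i j by (simp add: mm_entry del: index_mult_mat(1))
  also have "\<dots> = (\<Sum>l<d. (\<Sum>k. eterm (- X) i l k) * (\<Sum>k. eterm X l j k))"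
    using X i j by (intro sum.cong) (auto simp: mexp_entry)
  also have "\<dots> = (\<Sum>l<d. \<Sum>n. \<Sum>a\<le>n. eterm (- X) i l a * eterm X l j (n - a))"
    by (intro sum.cong refl Cauchy_product eterm_summable[OF Xm] eterm_summable[OF X]) (use i j in auto)
  also have "\<dots> = (\<Sum>n. \<Sum>l<d. \<Sum>a\<le>n. eterm (- X) i l a * eterm X l j (n - a))"
    by (rule suminf_sum[symmetric], rule summable_Cauchy_product)
       (intro eterm_summable[OF Xm] eterm_summable[OF X]; use i j in auto)+
  also have "\<dots> = (\<Sum>n. if n = 0 then 1\<^sub>m d $$ (i,j) else 0)"
  proof (rule arg_cong[where f = suminf], rule ext)
    fix n
    have "(\<Sum>l<d. \<Sum>a\<le>n. eterm (- X) i l a * eterm X l j (n - a))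
        = (\<Sum>a\<le>n. (-1) ^ a / (fact a * fact (n - a)) * (\<Sum>l<d. (X ^\<^sub>m a) $$ (i,l) * (X ^\<^sub>m (n - a)) $$ (l,j)))"
      unfolding eterm_def
      apply (subst sum.swap)
      apply (intro sum.cong refl)
      apply (subst sum_distrib_left)
      apply (intro sum.cong refl)
      using X i by (auto simp: pow_uminus[OF X])
    also have "\<dots> = (\<Sum>a\<le>n. (-1) ^ a / (fact a * fact (n - a)) * (X ^\<^sub>m n) $$ (i,j))"
    proof (intro sum.cong refl)
      fix a assume "a \<in> {..n}"
      then have "X ^\<^sub>m n = X ^\<^sub>m a * X ^\<^sub>m (n - a)"
        using pow_add[OF X, of a "n - a"] by simp
      then show "(-1) ^ a / (fact a * fact (n - a)) * (\<Sum>l<d. (X ^\<^sub>m a) $$ (i,l) * (X ^\<^sub>m (n - a)) $$ (l,j))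
          = (-1) ^ a / (fact a * fact (n - a)) * (X ^\<^sub>m n) $$ (i,j)"
        using X i j by (simp add: mm_entry del: index_mult_mat(1))
    qed
    also have "\<dots> = (\<Sum>a\<le>n. (-1) ^ a / (fact a * fact (n - a)) :: complex) * (X ^\<^sub>m n) $$ (i,j)"
      by (simp add: sum_distrib_right)
    also have "\<dots> = (if n = 0 then 1\<^sub>m d $$ (i,j) else 0)"
      unfolding alt_sum_fact using X i j by auto
    finally show "(\<Sum>l<d. \<Sum>a\<le>n. eterm (- X) i l a * eterm X l j (n - a)) = (if n = 0 then 1\<^sub>m d $$ (i,j) else 0)" .
  qed
  also have "\<dots> = 1\<^sub>m d $$ (i,j)"
    using sums_unique[OF sums_single[of 0 "\<lambda>_. 1\<^sub>m d $$ (i,j)"]] by (rule sym)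
  finally show "(mexp (- X) * mexp X) $$ (i,j) = 1\<^sub>m d $$ (i,j)" .
qed (use X in auto)


lemma adj_mexp:
  assumes X: "X \<in> carrier_mat d d"
  shows "adj (mexp X) = mexp (adj X)"
proof (rule eq_matI)
  fix i j assume ij: "i < dim_row (mexp (adj X))" "j < dim_col (mexp (adj X))"
  then have i: "i < d" and j: "j < d" using X by auto
  have "adj (mexp X) $$ (i,j) = cnj (\<Sum>k. eterm X j i k)"
    using X i j by (simp add: mexp_entry)
  also have "\<dots> = (\<Sum>k. cnj (eterm X j i k))"
  proof -
    have s: "(\<lambda>k. eterm X j i k) sums (\<Sum>k. eterm X j i k)"
      by (rule summable_sums, rule summable_norm_cancel, rule eterm_summable[OF X j i])
    from sums_cnj[THEN iffD2, OF s] show ?thesis by (rule sums_unique)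
  qed
  also have "\<dots> = (\<Sum>k. eterm (adj X) i j k)"
  proof (rule arg_cong[where f = suminf], rule ext)
    fix k
    have "adj (X ^\<^sub>m k) $$ (i,j) = cnj ((X ^\<^sub>m k) $$ (j,i))" using X i j by simp
    then show "cnj (eterm X j i k) = eterm (adj X) i j k"
      unfolding eterm_def adj_pow[OF X] by simp
  qed
  also have "\<dots> = mexp (adj X) $$ (i,j)" using X i j by (simp add: mexp_entry)
  finally show "adj (mexp X) $$ (i,j) = mexp (adj X) $$ (i,j)" .
qed (use X in auto)


lemma mexp_unitary:
  assumes X: "X \<in> carrier_mat d d" and ah: "adj X = - X"
  shows "adj (mexp X) * mexp X = 1\<^sub>m d"
  using mexp_neg_mult[OF X] adj_mexp[OF X] ah by simp

lemma sum_split: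
  fixes m n :: nat
  shows "(\<Sum>l<m*n. f l) = (\<Sum>a<m. \<Sum>b<n. (f (a*n+b) :: 'x :: comm_monoid_add))"
proof -
  have "(\<Sum>l<m*n. f l) = (\<Sum>p\<in>{..<m}\<times>{..<n}. f (fst p * n + snd p))"
  proof (rule sum.reindex_bij_witness[where j = "\<lambda>l. (l div n, l mod n)" and i = "\<lambda>p. fst p * n + snd p"])
    fix l assume l: "l \<in> {..<m*n}"
    then have n0: "n > 0" by (cases n) auto
    show "fst (l div n, l mod n) * n + snd (l div n, l mod n) = l" by simp
    show "(l div n, l mod n) \<in> {..<m}\<times>{..<n}"
      using l n0 by (auto simp: less_mult_imp_div_less)
    show "f (fst (l div n, l mod n) * n + snd (l div n, l mod n)) = f l" by simp
  next
    fix p :: "nat \<times> nat" assume p: "p \<in> {..<m}\<times>{..<n}"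
    then obtain a b where ab: "p = (a,b)" "a < m" "b < n" by auto
    show "((fst p * n + snd p) div n, (fst p * n + snd p) mod n) = p"
      using ab by auto
    have "a * n + b < a * n + n" using ab by simp
    also have "\<dots> = (a+1) * n" by simp
    also have "\<dots> \<le> m * n" using ab by (intro mult_right_mono) auto
    finally show "fst p * n + snd p \<in> {..<m*n}" using ab by simp
  qed
  also have "\<dots> = (\<Sum>a<m. \<Sum>b<n. f (a*n+b))"
    by (simp add: sum.cartesian_product split_beta)
  finally show ?thesis .
qed

definition fn2 :: "nat \<Rightarrow> (nat \<Rightarrow> complex) \<Rightarrow> real" where
  "fn2 D f = L2_set (\<lambda>i. cmod (f i)) {..<D}"

lemma fn2_nonneg[simp]: "0 \<le> fn2 D f"
  by (simp add: fn2_def)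

lemma fn2_cong: "(\<And>i. i < D \<Longrightarrow> f i = g i) \<Longrightarrow> fn2 D f = fn2 D g"
  unfolding fn2_def by (intro L2_set_cong) auto

lemma fn2_add: "fn2 D (\<lambda>i. f i + g i) \<le> fn2 D f + fn2 D g"
proof -
  have "fn2 D (\<lambda>i. f i + g i) \<le> L2_set (\<lambda>i. cmod (f i) + cmod (g i)) {..<D}"
    unfolding fn2_def by (intro L2_set_mono norm_triangle_ineq) auto
  also have "\<dots> \<le> fn2 D f + fn2 D g"
    unfolding fn2_def by (rule L2_set_triangle_ineq)
  finally show ?thesis .
qed

lemma fn2_scale: "fn2 D (\<lambda>i. a * f i) = cmod a * fn2 D f"
  unfolding fn2_def by (simp add: L2_set_right_distrib norm_mult)

lemma fn2_minus_commute: "fn2 D (\<lambda>i. f i - g i) = fn2 D (\<lambda>i. g i - f i)"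
  unfolding fn2_def by (simp add: norm_minus_commute)

lemma fn2_sum:
  assumes "finite J"
  shows "fn2 D (\<lambda>i. \<Sum>j\<in>J. g j i) \<le> (\<Sum>j\<in>J. fn2 D (g j))"
  using assms
proof (induction J rule: finite_induct)
  case empty
  then show ?case by (simp add: fn2_def L2_set_def)
next
  case (insert x F)
  have "fn2 D (\<lambda>i. \<Sum>j\<in>insert x F. g j i) = fn2 D (\<lambda>i. g x i + (\<Sum>j\<in>F. g j i))"
    using insert by simp
  also have "\<dots> \<le> fn2 D (g x) + fn2 D (\<lambda>i. \<Sum>j\<in>F. g j i)" by (rule fn2_add)
  also have "\<dots> \<le> fn2 D (g x) + (\<Sum>j\<in>F. fn2 D (g j))" using insert by simp
  finally show ?case using insert by simp
qed

lemma vnorm_fn2: "vnorm v = fn2 (dim_vec v) (\<lambda>i. v $ i)"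
  by (simp add: vnorm_def fn2_def L2_set_def)

lemma fn2_sq: "(fn2 D f)\<^sup>2 = (\<Sum>i<D. (cmod (f i))\<^sup>2)"
  unfolding fn2_def L2_set_def by (simp add: sum_nonneg)

lemma fn2_eqI: "(\<Sum>i<D. (cmod (f i))\<^sup>2) = (\<Sum>i<D'. (cmod (g i))\<^sup>2) \<Longrightarrow> fn2 D f = fn2 D' g"
  unfolding fn2_def L2_set_def by simp

lemma cmod_sq_cnj: "complex_of_real ((cmod z)\<^sup>2) = z * cnj z"
  by (rule complex_norm_square)

definition apl :: "complex mat \<Rightarrow> nat \<Rightarrow> (nat \<Rightarrow> complex) \<Rightarrow> nat \<Rightarrow> complex" where
  "apl E D w i = (\<Sum>e<D. E $$ (i,e) * w e)"

lemma fn2_unitary: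
  assumes E: "E \<in> carrier_mat d d" and U: "adj E * E = 1\<^sub>m d"
  shows "fn2 d (apl E d w) = fn2 d w"
proof (rule fn2_eqI)
  have uE: "(\<Sum>i<d. cnj (E $$ (i,f)) * E $$ (i,e)) = (if f = e then 1 else 0)" if "f < d" "e < d" for f e
  proof -
    have "(adj E * E) $$ (f,e) = (\<Sum>i<d. cnj (E $$ (i,f)) * E $$ (i,e))"
      using E that by (simp add: mm_entry del: index_mult_mat(1))
    then show ?thesis using U that by simp
  qed
  have "complex_of_real (\<Sum>i<d. (cmod (apl E d w i))\<^sup>2)
      = (\<Sum>i<d. (\<Sum>e<d. E $$ (i,e) * w e) * (\<Sum>f<d. cnj (E $$ (i,f)) * cnj (w f)))"
    by (simp only: of_real_sum cmod_sq_cnj apl_def cnj_sum complex_cnj_mult)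
  also have "\<dots> = (\<Sum>i<d. \<Sum>e<d. \<Sum>f<d. (w e * cnj (w f)) * (cnj (E $$ (i,f)) * E $$ (i,e)))"
    by (simp add: sum_product mult_ac)
  also have "\<dots> = (\<Sum>e<d. \<Sum>i<d. \<Sum>f<d. (w e * cnj (w f)) * (cnj (E $$ (i,f)) * E $$ (i,e)))"
    by (rule sum.swap)
  also have "\<dots> = (\<Sum>e<d. \<Sum>f<d. \<Sum>i<d. (w e * cnj (w f)) * (cnj (E $$ (i,f)) * E $$ (i,e)))"
    by (rule sum.cong[OF refl], rule sum.swap)
  also have "\<dots> = (\<Sum>e<d. \<Sum>f<d. (w e * cnj (w f)) * (\<Sum>i<d. cnj (E $$ (i,f)) * E $$ (i,e)))"
    by (simp add: sum_distrib_left)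
  also have "\<dots> = (\<Sum>e<d. \<Sum>f<d. (w e * cnj (w f)) * (if f = e then 1 else 0))"
    by (intro sum.cong refl) (simp add: uE)
  also have "\<dots> = (\<Sum>e<d. w e * cnj (w e))"
    by (simp add: if_distrib cong: if_cong)
  also have "\<dots> = complex_of_real (\<Sum>i<d. (cmod (w i))\<^sup>2)"
    by (simp only: of_real_sum cmod_sq_cnj)
  finally show "(\<Sum>i<d. (cmod (apl E d w i))\<^sup>2) = (\<Sum>i<d. (cmod (w i))\<^sup>2)"
    using of_real_eq_iff by blast
qed

lemma fn2_contract:
  "fn2 D (\<lambda>i. \<Sum>c<C. a c * z (c*D+i)) \<le> fn2 C a * fn2 (C*D) z"
proof -
  have "fn2 D (\<lambda>i. \<Sum>c<C. a c * z (c*D+i)) \<le> L2_set (\<lambda>i. fn2 C a * L2_set (\<lambda>c. cmod (z (c*D+i))) {..<C}) {..<D}"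
    unfolding fn2_def
  proof (rule L2_set_mono)
    fix i
    have "cmod (\<Sum>c<C. a c * z (c*D+i)) \<le> (\<Sum>c<C. \<bar>cmod (a c)\<bar> * \<bar>cmod (z (c*D+i))\<bar>)"
      by (rule order_trans[OF norm_sum]) (simp add: norm_mult)
    also have "\<dots> \<le> L2_set (\<lambda>c. cmod (a c)) {..<C} * L2_set (\<lambda>c. cmod (z (c*D+i))) {..<C}"
      by (rule L2_set_mult_ineq)
    finally show "cmod (\<Sum>c<C. a c * z (c*D+i)) \<le> L2_set (\<lambda>c. cmod (a c)) {..<C} * L2_set (\<lambda>c. cmod (z (c*D+i))) {..<C}" .
  qed auto
  also have "\<dots> = fn2 C a * L2_set (\<lambda>i. L2_set (\<lambda>c. cmod (z (c*D+i))) {..<C}) {..<D}"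
    by (simp add: L2_set_right_distrib)
  also have "L2_set (\<lambda>i. L2_set (\<lambda>c. cmod (z (c*D+i))) {..<C}) {..<D} = fn2 (C*D) z"
  proof -
    have "(\<Sum>i<D. (L2_set (\<lambda>c. cmod (z (c*D+i))) {..<C})\<^sup>2) = (\<Sum>i<D. \<Sum>c<C. (cmod (z (c*D+i)))\<^sup>2)"
      by (simp add: L2_set_def sum_nonneg)
    also have "\<dots> = (\<Sum>c<C. \<Sum>i<D. (cmod (z (c*D+i)))\<^sup>2)"
      by (rule sum.swap)
    also have "\<dots> = (\<Sum>l<C*D. (cmod (z l))\<^sup>2)"
      by (rule sum_split[symmetric])
    finally show ?thesis unfolding fn2_def by (simp add: L2_set_def)
  qed
  finally show ?thesis .
qed

lemma fn2_le_sum: "fn2 D f \<le> (\<Sum>i<D. cmod (f i))"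
  unfolding fn2_def using L2_set_le_sum_abs by (metis (no_types, lifting) abs_norm_cancel sum.cong)

lemma fn2_member: "i < D \<Longrightarrow> cmod (f i) \<le> fn2 D f"
  unfolding fn2_def by (rule member_le_L2_set) auto

lemma vnorm_smult: "vnorm (a \<cdot>\<^sub>v v) = cmod a * vnorm v"
  unfolding vnorm_fn2 fn2_scale[symmetric] by (simp, rule fn2_cong, simp)

lemma opnorm_bound:
  assumes d: "dim_col B = dim_vec z"
  shows "vnorm (B *\<^sub>v z) \<le> opnorm B * vnorm z"
proof -
  let ?S = "{vnorm (B *\<^sub>v v) | v. v \<in> carrier_vec (dim_col B) \<and> vnorm v \<le> 1}"
  define F where "F = (\<Sum>i<dim_row B. \<Sum>j<dim_col B. cmod (B $$ (i,j)))"
  have bdd: "bdd_above ?S"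
  proof (rule bdd_aboveI[where M = F], clarify)
    fix v :: "complex vec" assume v: "v \<in> carrier_vec (dim_col B)" "vnorm v \<le> 1"
    have "vnorm (B *\<^sub>v v) \<le> (\<Sum>i<dim_row B. cmod ((B *\<^sub>v v) $ i))"
      using fn2_le_sum[of "dim_vec (B *\<^sub>v v)" "\<lambda>i. (B *\<^sub>v v) $ i"] unfolding vnorm_fn2 by (simp del: index_mult_mat_vec)
    also have "\<dots> \<le> F" unfolding F_def
    proof (rule sum_mono)
      fix i assume i: "i \<in> {..<dim_row B}"
      have "cmod ((B *\<^sub>v v) $ i) = cmod (\<Sum>j<dim_col B. B $$ (i,j) * v $ j)"
        using i v by (simp add: mv_entry del: index_mult_mat_vec)
      also have "\<dots> \<le> (\<Sum>j<dim_col B. cmod (B $$ (i,j)) * cmod (v $ j))"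
        by (rule order_trans[OF norm_sum]) (simp add: norm_mult)
      also have "\<dots> \<le> (\<Sum>j<dim_col B. cmod (B $$ (i,j)) * 1)"
      proof (rule sum_mono, rule mult_left_mono)
        fix j assume "j \<in> {..<dim_col B}"
        then have "cmod (v $ j) \<le> vnorm v" unfolding vnorm_fn2 using v by (intro fn2_member) auto
        then show "cmod (v $ j) \<le> 1" using v by simp
      qed auto
      finally show "cmod ((B *\<^sub>v v) $ i) \<le> (\<Sum>j<dim_col B. cmod (B $$ (i,j)))" by simp
    qed
    finally show "vnorm (B *\<^sub>v v) \<le> F" .
  qed
  show ?thesis
  proof (cases "vnorm z = 0")
    case True
    have z0: "z $ j = 0" if "j < dim_vec z" for j
      using fn2_member[OF that, of "\<lambda>i. z $ i"] True unfolding vnorm_fn2 by simp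
    have "vnorm (B *\<^sub>v z) = fn2 (dim_row B) (\<lambda>i. 0)"
      unfolding vnorm_fn2 by (simp only: dim_mult_mat_vec, intro fn2_cong) (simp add: mv_entry d z0 del: index_mult_mat_vec)
    then show ?thesis using True by (simp add: fn2_def L2_set_def)
  next
    case False
    then have nz: "vnorm z > 0" using vnorm_fn2[of z] fn2_nonneg[of "dim_vec z" "\<lambda>i. z $ i"] by linarith
    define v where "v = complex_of_real (1 / vnorm z) \<cdot>\<^sub>v z"
    have vc: "v \<in> carrier_vec (dim_col B)" using d by (simp add: v_def)
    have vn: "vnorm v = 1" using nz by (simp add: v_def vnorm_smult norm_divide)
    have "vnorm (B *\<^sub>v v) \<le> opnorm B" unfolding opnorm_def
      by (rule cSup_upper[OF _ bdd]) (use vc vn in auto)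
    moreover have "B *\<^sub>v v = complex_of_real (1 / vnorm z) \<cdot>\<^sub>v (B *\<^sub>v z)"
      unfolding v_def by (rule mult_mat_vec[of _ "dim_row B" "dim_col B"]) (use d in auto)
    ultimately have "vnorm (B *\<^sub>v z) / vnorm z \<le> opnorm B"
      using nz by (simp add: vnorm_smult norm_divide)
    then show ?thesis using nz by (simp add: field_simps)
  qed
qed

lemma kron_dims[simp]: "dim_row (kron A B) = dim_row A * dim_row B" "dim_col (kron A B) = dim_col A * dim_col B"
  by (auto simp: kron_def)

lemma kron_entry:
  "i < dim_row A * dim_row B \<Longrightarrow> j < dim_col A * dim_col B \<Longrightarrow>
   kron A B $$ (i,j) = A $$ (i div dim_row B, j div dim_col B) * B $$ (i mod dim_row B, j mod dim_col B)"
  by (simp add: kron_def)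

lemma div_mod_eq_iff: "(i::nat) = j \<longleftrightarrow> i div b = j div b \<and> i mod b = j mod b"
  by (metis div_mult_mod_eq)

lemma unitary_kron:
  assumes A: "A \<in> carrier_mat a a" and B: "B \<in> carrier_mat b b"
    and uA: "adj A * A = 1\<^sub>m a" and uB: "adj B * B = 1\<^sub>m b"
  shows "adj (kron A B) * kron A B = 1\<^sub>m (a*b)"
proof (rule eq_matI)
  fix i j assume "i < dim_row (1\<^sub>m (a*b))" "j < dim_col (1\<^sub>m (a*b))"
  then have i: "i < a*b" and j: "j < a*b" by auto
  then have b0: "b > 0" by (cases b) auto
  have ib: "i div b < a" "j div b < a" using i j by (auto simp: less_mult_imp_div_less)
  have ibm: "i mod b < b" "j mod b < b" using b0 by auto
  have oA: "(\<Sum>p<a. cnj (A $$ (p, i div b)) * A $$ (p, j div b)) = (if i div b = j div b then 1 else 0)"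
  proof -
    have "(adj A * A) $$ (i div b, j div b) = (\<Sum>p<a. cnj (A $$ (p, i div b)) * A $$ (p, j div b))"
      using A ib by (simp add: mm_entry del: index_mult_mat(1))
    then show ?thesis using uA ib by simp
  qed
  have oB: "(\<Sum>q<b. cnj (B $$ (q, i mod b)) * B $$ (q, j mod b)) = (if i mod b = j mod b then 1 else 0)"
  proof -
    have "(adj B * B) $$ (i mod b, j mod b) = (\<Sum>q<b. cnj (B $$ (q, i mod b)) * B $$ (q, j mod b))"
      using B ibm by (simp add: mm_entry del: index_mult_mat(1))
    then show ?thesis using uB ibm by simp
  qed
  have ab: "p * b + q < a * b" if "p < a" "q < b" for p q
  proof -
    have "p * b + q < p * b + b" using that by simp
    also have "\<dots> = (p+1) * b" by simp
    also have "\<dots> \<le> a * b" using that by (intro mult_right_mono) auto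
    finally show ?thesis .
  qed
  have "(adj (kron A B) * kron A B) $$ (i,j) = (\<Sum>l<a*b. cnj (kron A B $$ (l,i)) * kron A B $$ (l,j))"
    using A B i j by (simp add: mm_entry del: index_mult_mat(1))
  also have "\<dots> = (\<Sum>p<a. \<Sum>q<b. cnj (kron A B $$ (p*b+q,i)) * kron A B $$ (p*b+q,j))"
    by (rule sum_split)
  also have "\<dots> = (\<Sum>p<a. \<Sum>q<b. (cnj (A $$ (p, i div b)) * A $$ (p, j div b)) * (cnj (B $$ (q, i mod b)) * B $$ (q, j mod b)))"
    by (intro sum.cong refl) (use A B i j ab b0 in \<open>auto simp: kron_entry\<close>)
  also have "\<dots> = (\<Sum>p<a. cnj (A $$ (p, i div b)) * A $$ (p, j div b)) * (\<Sum>q<b. cnj (B $$ (q, i mod b)) * B $$ (q, j mod b))"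
    by (simp add: sum_product)
  also have "\<dots> = 1\<^sub>m (a*b) $$ (i,j)"
    unfolding oA oB using i j div_mod_eq_iff[of i j b] by auto
  finally show "(adj (kron A B) * kron A B) $$ (i,j) = 1\<^sub>m (a*b) $$ (i,j)" .
qed (use A B in auto)

lemma unitary_one: "adj (1\<^sub>m d) * 1\<^sub>m d = (1\<^sub>m d :: complex mat)"
proof -
  have "adj (1\<^sub>m d) = (1\<^sub>m d :: complex mat)" by (intro eq_matI) auto
  then show ?thesis by simp
qed

lemma unitary_adj:
  assumes U: "U \<in> carrier_mat d d" and u: "adj U * U = 1\<^sub>m d"
  shows "adj (adj U) * adj U = 1\<^sub>m d"
proof -
  have "U * adj U = 1\<^sub>m d"
    by (rule mat_mult_left_right_inverse[of _ d]) (use U u in auto)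
  then show ?thesis by simp
qed

lemma unitary_mult:
  assumes A: "A \<in> carrier_mat d d" and B: "B \<in> carrier_mat d d"
    and uA: "adj A * A = 1\<^sub>m d" and uB: "adj B * B = 1\<^sub>m d"
  shows "adj (A * B) * (A * B) = 1\<^sub>m d"
proof -
  have aA: "adj A \<in> carrier_mat d d" and aB: "adj B \<in> carrier_mat d d" using A B by auto
  have "adj (A * B) * (A * B) = (adj B * adj A) * (A * B)" using A B by (simp add: adj_mult)
  also have "\<dots> = adj B * ((adj A * A) * B)"
    using A B aA aB by (simp add: assoc_mult_mat[of _ d d _ d _ d])
  also have "\<dots> = 1\<^sub>m d" using uA uB B by simp
  finally show ?thesis .
qed

lemma foldr_dims:
  "dim_row (foldr (\<lambda>j acc. X j + acc) xs Z) = dim_row Z"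
  "dim_col (foldr (\<lambda>j acc. X j + acc) xs Z) = dim_col Z"
  by (induction xs) auto

lemma foldr_entry:
  fixes X :: "nat \<Rightarrow> complex mat"
  assumes "r < dim_row Z" "s < dim_col Z"
  shows "foldr (\<lambda>j acc. X j + acc) xs Z $$ (r,s) = (\<Sum>j\<leftarrow>xs. X j $$ (r,s)) + Z $$ (r,s)"
  using assms by (induction xs) (auto simp: foldr_dims)

lemma sum_list_upt_lessThan: "(\<Sum>j\<leftarrow>[0..<M]. f j) = (\<Sum>j<M. f j)"
  by (simp add: sum_set_upt_conv_sum_list_nat[symmetric] atLeast0LessThan)

lemma ket_dims[simp]: "dim_row (ket m j) = 2^m" "dim_col (ket m j) = 1"
  by (auto simp: ket_def)

lemma ket_entry: "i < 2^m \<Longrightarrow> ket m j $$ (i,0) = (if i = j then 1 else 0)"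
  by (simp add: ket_def)

lemma ketbra_dims[simp]: "dim_row (ketbra m j) = 2^m" "dim_col (ketbra m j) = 2^m"
  by (auto simp: ketbra_def)

lemma ketbra_entry: "a < 2^m \<Longrightarrow> b < 2^m \<Longrightarrow> ketbra m j $$ (a,b) = (if a = j \<and> b = j then 1 else 0)"
  by (simp add: ketbra_def mm_entry ket_entry del: index_mult_mat(1))

lemma bra0_dims[simp]: "dim_row (bra0_I a D) = D" "dim_col (bra0_I a D) = 2^a * D"
  by (auto simp: bra0_I_def)

lemma bra0_entry:
  assumes "i < D" "j < 2^a * D"
  shows "bra0_I a D $$ (i,j) = (if j = i then 1 else 0)"
proof -
  have D0: "D > 0" using assms by auto
  have "bra0_I a D $$ (i,j) = adj (ket a 0) $$ (0, j div D) * 1\<^sub>m D $$ (i, j mod D)"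
    unfolding bra0_I_def using assms by (simp add: kron_entry)
  also have "\<dots> = (if j div D = 0 then 1 else 0) * (if i = j mod D then 1 else 0)"
    using assms D0 by (simp add: ket_entry less_mult_imp_div_less)
  also have "\<dots> = (if j = i then 1 else 0)"
    using assms by (auto simp: div_eq_0_iff)
  finally show ?thesis .
qed

lemma ket0_dims[simp]: "dim_row (ket0_I a D) = 2^a * D" "dim_col (ket0_I a D) = D"
  by (auto simp: ket0_I_def)

lemma ket0_entry:
  assumes "i < 2^a * D" "j < D"
  shows "ket0_I a D $$ (i,j) = (if i = j then 1 else 0)"
proof -
  have D0: "D > 0" using assms by auto
  have "ket0_I a D $$ (i,j) = ket a 0 $$ (i div D, 0) * 1\<^sub>m D $$ (i mod D, j)"
    unfolding ket0_I_def using assms by (simp add: kron_entry)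
  also have "\<dots> = (if i div D = 0 then 1 else 0) * (if i mod D = j then 1 else 0)"
    using assms D0 by (simp add: ket_entry less_mult_imp_div_less)
  also have "\<dots> = (if i = j then 1 else 0)"
    using assms by (auto simp: div_eq_0_iff)
  finally show ?thesis .
qed

lemma if10_mult: "(if P then 1 else 0) * (x::complex) = (if P then x else 0)"
  by simp

lemma bra0_mv:
  assumes "dim_vec w = 2^a * D" "i < D"
  shows "(bra0_I a D *\<^sub>v w) $ i = w $ i"
proof -
  have iD: "i < 2^a * D" using assms(2) by (metis less_le_trans mult_le_mono1 one_le_numeral one_le_power mult_1)
  have "(bra0_I a D *\<^sub>v w) $ i = (\<Sum>l<2^a*D. (if l = i then 1 else 0) * w $ l)"
    using assms by (simp add: mv_entry del: index_mult_mat_vec) (intro sum.cong refl, simp add: bra0_entry assms)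
  also have "\<dots> = w $ i" using iD by (simp add: if10_mult)
  finally show ?thesis .
qed

lemma ket0_mv:
  assumes "dim_vec z = D" "l < 2^a * D"
  shows "(ket0_I a D *\<^sub>v z) $ l = (if l < D then z $ l else 0)"
proof -
  have "(ket0_I a D *\<^sub>v z) $ l = (\<Sum>j<D. (if l = j then 1 else 0) * z $ j)"
    using assms by (simp add: mv_entry del: index_mult_mat_vec) (intro sum.cong refl, simp add: ket0_entry assms)
  also have "\<dots> = (if l < D then z $ l else 0)" by (simp add: if10_mult)
  finally show ?thesis .
qed

definition genX :: "complex mat \<Rightarrow> real \<Rightarrow> real \<Rightarrow> complex mat" where
  "genX A t k = (- \<i> * complex_of_real t) \<cdot>\<^sub>m
      (complex_of_real k \<cdot>\<^sub>m herm_part A + antiherm_part A)"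

lemma genX_dims:
  "dim_row (genX A t k) = dim_col A" "dim_col (genX A t k) = dim_row A"
  unfolding genX_def herm_part_def antiherm_part_def
  by (simp_all only: index_smult_mat index_add_mat index_minus_mat adj_dims)

lemma genX_carrier: "A \<in> carrier_mat d d \<Longrightarrow> genX A t k \<in> carrier_mat d d"
  by (rule carrier_matI) (simp_all add: genX_dims)

lemma genX_entry:
  assumes "A \<in> carrier_mat d d" "i < d" "j < d"
  shows "genX A t k $$ (i,j) = (- \<i> * complex_of_real t) *
     (complex_of_real k * ((1/2) * (A $$ (i,j) + cnj (A $$ (j,i)))) + (1 / (2 * \<i>)) * (A $$ (i,j) - cnj (A $$ (j,i))))"
  using assms by (simp add: genX_def herm_part_def antiherm_part_def)

lemma cnj_genX_aux: "cnj ((- \<i> * complex_of_real t) * (complex_of_real k * ((1/2) * (b + cnj a)) + (1/(2*\<i>)) * (b - cnj a)))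
  = - ((- \<i> * complex_of_real t) * (complex_of_real k * ((1/2) * (a + cnj b)) + (1/(2*\<i>)) * (a - cnj b)))"
  by (simp add: complex_eq_iff algebra_simps add_divide_distrib[symmetric])

lemma genX_adj:
  assumes A: "A \<in> carrier_mat d d"
  shows "adj (genX A t k) = - genX A t k"
proof -
  have dG0: "dim_row (genX A t k) = d" "dim_col (genX A t k) = d" using A by (simp_all add: genX_dims)
  show ?thesis
proof (rule eq_matI)
  fix i j assume "i < dim_row (- genX A t k)" "j < dim_col (- genX A t k)"
  moreover have dG: "dim_row (genX A t k) = d" "dim_col (genX A t k) = d" using A by (simp_all add: genX_dims)
  ultimately have i: "i < d" and j: "j < d" by auto
  have "adj (genX A t k) $$ (i,j) = cnj (genX A t k $$ (j,i))"
    using dG i j by simp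
  also have "\<dots> = - genX A t k $$ (i,j)"
    unfolding genX_entry[OF A j i] genX_entry[OF A i j]
    by (rule cnj_genX_aux)
  also have "\<dots> = (- genX A t k) $$ (i,j)"
    using dG i j by simp
  finally show "adj (genX A t k) $$ (i,j) = (- genX A t k) $$ (i,j)" .
qed (use dG0 in auto)
qed

lemma evol_genX: "evol A t k = mexp (genX A t k)"
  by (simp add: evol_def genX_def)

lemma evol_carrier: assumes A: "A \<in> carrier_mat d d" shows "evol A t k \<in> carrier_mat d d"
proof -
  have "genX A t k \<in> carrier_mat d d" by (rule genX_carrier[OF A])
  then show ?thesis unfolding evol_genX carrier_mat_def by simp
qed

lemma evol_unitary: assumes A: "A \<in> carrier_mat d d" shows "adj (evol A t k) * evol A t k = 1\<^sub>m d"
  unfolding evol_genX by (rule mexp_unitary[OF genX_carrier[OF A] genX_adj[OF A]])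

lemma Qmat_dims: "dim_row (Qmat A t k M mc n) = 2^mc * 2^n" "dim_col (Qmat A t k M mc n) = 2^mc * 2^n"
  by (simp_all add: Qmat_def foldr_dims)

lemma Qmat_entry:
  assumes A: "A \<in> carrier_mat (2^n) (2^n)" and M: "M \<le> 2^mc"
    and r: "r < 2^mc * 2^n" and s: "s < 2^mc * 2^n"
  shows "Qmat A t k M mc n $$ (r,s) =
     (if r div 2^n = s div 2^n \<and> r div 2^n < M then evol A t (k (r div 2^n)) $$ (r mod 2^n, s mod 2^n) else 0)"
proof -
  let ?D = "2^n :: nat"
  have rd: "r div ?D < 2^mc" "s div ?D < 2^mc" using r s by (auto simp: less_mult_imp_div_less)
  have Ed: "dim_row (evol A t (k j)) = ?D" "dim_col (evol A t (k j)) = ?D" for j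
    using evol_carrier[OF A] by auto
  have "Qmat A t k M mc n $$ (r,s) = (\<Sum>j<M. kron (ketbra mc j) (evol A t (k j)) $$ (r,s))"
    unfolding Qmat_def using r s by (simp add: foldr_entry sum_list_upt_lessThan)
  also have "\<dots> = (\<Sum>j<M. (if r div ?D = j \<and> s div ?D = j then 1 else 0) * evol A t (k j) $$ (r mod ?D, s mod ?D))"
    using r s rd by (intro sum.cong refl) (simp add: kron_entry Ed ketbra_entry)
  also have "\<dots> = (\<Sum>j<M. (if j = r div ?D then (if s div ?D = r div ?D then evol A t (k j) $$ (r mod ?D, s mod ?D) else 0) else 0))"
    by (intro sum.cong refl) auto
  also have "\<dots> = (if r div ?D = s div ?D \<and> r div ?D < M then evol A t (k (r div ?D)) $$ (r mod ?D, s mod ?D) else 0)"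
    by (subst sum.delta) auto
  finally show ?thesis .
qed

lemma LCU_dims: "dim_row (LCU A t k c n) = 2^n" "dim_col (LCU A t k c n) = 2^n"
  by (simp_all add: LCU_def foldr_dims)

lemma LCU_entry:
  assumes A: "A \<in> carrier_mat (2^n) (2^n)" and i: "i < 2^n" and e: "e < 2^n"
  shows "LCU A t k c n $$ (i,e) = (\<Sum>j<dim_vec c. c $ j * evol A t (k j) $$ (i,e))"
proof -
  have Ed: "dim_row (evol A t (k j)) = 2^n" "dim_col (evol A t (k j)) = 2^n" for j
    using evol_carrier[OF A] by auto
  show ?thesis
    unfolding LCU_def using i e by (simp add: foldr_entry sum_list_upt_lessThan Ed)
qed

lemma idx_lt: "p < (a::nat) \<Longrightarrow> r < b \<Longrightarrow> p * b + r < a * b"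
proof -
  assume "p < a" "r < b"
  then have "p * b + r < p * b + b" by simp
  also have "\<dots> = (p+1) * b" by simp
  also have "\<dots> \<le> a * b" using \<open>p < a\<close> by (intro mult_right_mono) auto
  finally show ?thesis .
qed

lemma kron_mv:
  assumes A: "dim_row A = a" "dim_col A = a'" and B: "dim_row B = b" "dim_col B = b'"
    and w: "dim_vec w = a' * b'" and p: "p < a" and r: "r < b"
  shows "(kron A B *\<^sub>v w) $ (p*b+r) = (\<Sum>p'<a'. \<Sum>r'<b'. A $$ (p,p') * B $$ (r,r') * w $ (p'*b'+r'))"
proof -
  have pr: "p*b+r < a*b" by (rule idx_lt[OF p r])
  have "(kron A B *\<^sub>v w) $ (p*b+r) = (\<Sum>j<a'*b'. kron A B $$ (p*b+r, j) * w $ j)"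
    using pr A B w by (simp add: mv_entry del: index_mult_mat_vec)
  also have "\<dots> = (\<Sum>p'<a'. \<Sum>r'<b'. kron A B $$ (p*b+r, p'*b'+r') * w $ (p'*b'+r'))"
    by (rule sum_split)
  also have "\<dots> = (\<Sum>p'<a'. \<Sum>r'<b'. A $$ (p,p') * B $$ (r,r') * w $ (p'*b'+r'))"
  proof (intro sum.cong refl)
    fix p' r' assume "p' \<in> {..<a'}" "r' \<in> {..<b'}"
    then have p': "p' < a'" and r': "r' < b'" by auto
    have "p'*b'+r' < a'*b'" by (rule idx_lt[OF p' r'])
    then show "kron A B $$ (p*b+r, p'*b'+r') * w $ (p'*b'+r') = A $$ (p,p') * B $$ (r,r') * w $ (p'*b'+r')"
      using pr A B r r' by (simp add: kron_entry)
  qed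
  finally show ?thesis .
qed

lemma idx_decomp: "(l::nat) = (l div b) * b + l mod b"
  by simp

lemma mult_if10: "(x::complex) * (if P then 1 else 0) = (if P then x else 0)"
  by simp

lemma unit_mv: "(U :: complex mat) \<in> carrier_mat d d \<Longrightarrow> j < d \<Longrightarrow> (U *\<^sub>v unit_vec d 0) $ j = U $$ (j,0)"
  by (simp add: mv_entry mult_if10 del: index_mult_mat_vec)

lemma col_norm:
  assumes U: "U \<in> carrier_mat d d" and u: "adj U * U = 1\<^sub>m d" and d: "0 < d"
  shows "fn2 d (\<lambda>c. U $$ (c,0)) = 1"
proof -
  have "(adj U * U) $$ (0,0) = (\<Sum>c<d. cnj (U $$ (c,0)) * U $$ (c,0))"
    using U d by (simp add: mm_entry del: index_mult_mat(1))
  then have "(\<Sum>c<d. cnj (U $$ (c,0)) * U $$ (c,0)) = 1" using u d by simp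
  then have "complex_of_real (\<Sum>c<d. (cmod (U $$ (c,0)))\<^sup>2) = 1"
    by (simp only: of_real_sum cmod_sq_cnj mult.commute)
  then have "(\<Sum>c<d. (cmod (U $$ (c,0)))\<^sup>2) = 1"
    by (metis of_real_eq_1_iff)
  then show ?thesis unfolding fn2_def L2_set_def by simp
qed

lemma unit_mv': "(M :: complex mat) \<in> carrier_mat d' d \<Longrightarrow> l < d' \<Longrightarrow> 0 < d \<Longrightarrow> (M *\<^sub>v unit_vec d 0) $ l = M $$ (l,0)"
  by (simp add: mv_entry mult_if10 del: index_mult_mat_vec)

lemma sum_delta_one: "p < (a::nat) \<Longrightarrow> (\<Sum>p'<a. (1\<^sub>m a $$ (p,p') :: complex) * f p') = f p"
proof -
  assume p: "p < a"
  have "(\<Sum>p'<a. (1\<^sub>m a $$ (p,p') :: complex) * f p') = (\<Sum>p'<a. if p = p' then f p' else 0)"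
    using p by (intro sum.cong refl) auto
  also have "\<dots> = f p" using p by simp
  finally show ?thesis .
qed

lemma sum_delta_one': "p < (a::nat) \<Longrightarrow> (\<Sum>p'<a. (1\<^sub>m a $$ (p',p) :: complex) * f p') = f p"
proof -
  assume p: "p < a"
  have "(\<Sum>p'<a. (1\<^sub>m a $$ (p',p) :: complex) * f p') = (\<Sum>p'<a. if p' = p then f p' else 0)"
    using p by (intro sum.cong refl) auto
  also have "\<dots> = f p" using p by simp
  finally show ?thesis .
qed

lemma kron_one_left:
  fixes B :: "complex mat"
  assumes B: "dim_row B = b" "dim_col B = b'" and w: "dim_vec w = a * b'" and p: "p < a" and r: "r < b"
  shows "(kron (1\<^sub>m a) B *\<^sub>v w) $ (p*b+r) = (\<Sum>r'<b'. B $$ (r,r') * w $ (p*b'+r'))"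
proof -
  have "(kron (1\<^sub>m a) B *\<^sub>v w) $ (p*b+r) = (\<Sum>p'<a. \<Sum>r'<b'. 1\<^sub>m a $$ (p,p') * B $$ (r,r') * w $ (p'*b'+r'))"
    by (rule kron_mv) (use B w p r in auto)
  also have "\<dots> = (\<Sum>p'<a. 1\<^sub>m a $$ (p,p') * (\<Sum>r'<b'. B $$ (r,r') * w $ (p'*b'+r')))"
    by (simp add: sum_distrib_left mult.assoc)
  also have "\<dots> = (\<Sum>r'<b'. B $$ (r,r') * w $ (p*b'+r'))"
    by (rule sum_delta_one[OF p])
  finally show ?thesis .
qed

lemma kron_one_right:
  fixes A :: "complex mat"
  assumes A: "dim_row A = a" "dim_col A = a'" and w: "dim_vec w = a' * b" and p: "p < a" and r: "r < b"
  shows "(kron A (1\<^sub>m b) *\<^sub>v w) $ (p*b+r) = (\<Sum>p'<a'. A $$ (p,p') * w $ (p'*b+r))"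
proof -
  have "(kron A (1\<^sub>m b) *\<^sub>v w) $ (p*b+r) = (\<Sum>p'<a'. \<Sum>r'<b. A $$ (p,p') * 1\<^sub>m b $$ (r,r') * w $ (p'*b+r'))"
    by (rule kron_mv) (use A w p r in auto)
  also have "\<dots> = (\<Sum>p'<a'. A $$ (p,p') * (\<Sum>r'<b. 1\<^sub>m b $$ (r,r') * w $ (p'*b+r')))"
    by (simp add: sum_distrib_left mult_ac)
  also have "\<dots> = (\<Sum>p'<a'. A $$ (p,p') * w $ (p'*b+r))"
    by (intro sum.cong refl, subst sum_delta_one[OF r]) auto
  finally show ?thesis .
qed

lemma circuit_postsel:
  fixes UQ Ocl Ocr U0 :: "complex mat"
  assumes UQ: "UQ \<in> carrier_mat (2^mQ * (2^mc * 2^n)) (2^mQ * (2^mc * 2^n))"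
    and Ol: "Ocl \<in> carrier_mat (2^mc) (2^mc)" and Or: "Ocr \<in> carrier_mat (2^mc) (2^mc)"
    and U0: "U0 \<in> carrier_mat (2^n) (2^n)" and i: "i < 2^n"
  shows "postsel (lcu_circuit mQ mc n UQ Ocl Ocr U0) (mc+mQ) (mc+mQ+n) $ i
    = (\<Sum>c<2^mc. cnj (Ocl $$ (c,0)) * (UQ *\<^sub>v (ket0_I mQ (2^mc*2^n) *\<^sub>v
         vec (2^mc*2^n) (\<lambda>l. Ocr $$ (l div 2^n, 0) * U0 $$ (l mod 2^n, 0)))) $ (c*2^n+i))"
proof -
  let ?D = "2^n :: nat" and ?C = "2^mc :: nat" and ?Q = "2^mQ :: nat"
  let ?N = "?Q * (?C * ?D)"
  have D0: "0 < ?D" "0 < ?C" "0 < ?Q" by auto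
  have N1: "2^(mc+mQ+n) = ?N" unfolding power_add by (simp add: mult_ac)
  have N2: "2^(mc+mQ) * ?D = ?N" unfolding power_add by (simp add: mult_ac)
  have N3: "(?Q * ?C) * ?D = ?N" by (simp add: mult_ac)
  have N4: "mc + mQ + n - (mc + mQ) = n" by simp
  define K1 where "K1 = kron (1\<^sub>m ?Q) (kron (adj Ocl) (1\<^sub>m ?D))"
  define K2 where "K2 = kron (1\<^sub>m ?Q) (kron Ocr (1\<^sub>m ?D))"
  define K3 where "K3 = kron (1\<^sub>m (?Q * ?C)) U0"
  define yv where "yv = vec (?C*?D) (\<lambda>l. Ocr $$ (l div ?D, 0) * U0 $$ (l mod ?D, 0))"
  have K1c: "K1 \<in> carrier_mat ?N ?N" using Ol unfolding K1_def by auto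
  have K2c: "K2 \<in> carrier_mat ?N ?N" using Or unfolding K2_def by auto
  have K3c': "K3 \<in> carrier_mat ((?Q * ?C) * ?D) ((?Q * ?C) * ?D)" using U0 unfolding K3_def by auto
  have K3c: "K3 \<in> carrier_mat ?N ?N" using K3c' unfolding N3 .
  have W: "lcu_circuit mQ mc n UQ Ocl Ocr U0 = K1 * UQ * K2 * K3"
    by (simp add: lcu_circuit_def K1_def K2_def K3_def)
  define e0 where "e0 = (unit_vec ?N 0 :: complex vec)"
  have e0c: "e0 \<in> carrier_vec ?N" by (simp add: e0_def)
  have ket: "ket0v (mc+mQ+n) = e0" by (simp add: ket0v_def e0_def N1)
  define s3 where "s3 = K3 *\<^sub>v e0"
  define s2 where "s2 = K2 *\<^sub>v s3"
  define s1 where "s1 = UQ *\<^sub>v s2"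
  have s3c: "s3 \<in> carrier_vec ?N" using K3c e0c unfolding s3_def by auto
  have s2c: "s2 \<in> carrier_vec ?N" using K2c s3c unfolding s2_def by auto
  have s1c: "s1 \<in> carrier_vec ?N" using UQ s2c unfolding s1_def by auto
  have Wv: "(K1 * UQ * K2 * K3) *\<^sub>v e0 = K1 *\<^sub>v s1"
  proof -
    have "(K1 * UQ * K2 * K3) *\<^sub>v e0 = (K1 * UQ * K2) *\<^sub>v s3"
      unfolding s3_def by (rule assoc_mult_mat_vec[OF _ K3c e0c]) (use K1c UQ K2c in auto)
    also have "\<dots> = (K1 * UQ) *\<^sub>v s2"
      unfolding s2_def by (rule assoc_mult_mat_vec[OF _ K2c s3c]) (use K1c UQ in auto)
    also have "\<dots> = K1 *\<^sub>v s1"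
      unfolding s1_def by (rule assoc_mult_mat_vec[OF K1c UQ s2c])
    finally show ?thesis .
  qed
  have ps: "postsel (lcu_circuit mQ mc n UQ Ocl Ocr U0) (mc+mQ) (mc+mQ+n) = bra0_I (mc+mQ) ?D *\<^sub>v (K1 *\<^sub>v s1)"
  proof -
    have "postsel (lcu_circuit mQ mc n UQ Ocl Ocr U0) (mc+mQ) (mc+mQ+n) = (bra0_I (mc+mQ) ?D * (K1 * UQ * K2 * K3)) *\<^sub>v e0"
      unfolding postsel_def N4 W ket ..
    also have "\<dots> = bra0_I (mc+mQ) ?D *\<^sub>v ((K1 * UQ * K2 * K3) *\<^sub>v e0)"
    proof (rule assoc_mult_mat_vec[of _ ?D ?N _ ?N])
      show "bra0_I (mc+mQ) ?D \<in> carrier_mat ?D ?N"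
        unfolding carrier_mat_def by (simp add: power_add mult_ac)
      show "K1 * UQ * K2 * K3 \<in> carrier_mat ?N ?N"
        using K1c UQ K2c K3c by (intro mult_carrier_mat)
      show "e0 \<in> carrier_vec ?N" by (rule e0c)
    qed
    finally show ?thesis using Wv by simp
  qed
  have s3e: "s3 $ l = (if l < ?D then U0 $$ (l,0) else 0)" if l: "l < ?N" for l
  proof -
    have lQC: "l < (?Q * ?C) * ?D" using l unfolding N3 .
    have "s3 $ l = K3 $$ (l,0)" unfolding s3_def e0_def
      by (rule unit_mv'[OF K3c l]) simp
    also have "\<dots> = 1\<^sub>m (?Q * ?C) $$ (l div ?D, 0) * U0 $$ (l mod ?D, 0)"
      unfolding K3_def using lQC U0 D0 by (subst kron_entry) auto
    also have "\<dots> = (if l < ?D then U0 $$ (l,0) else 0)"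
    proof -
      have "l div ?D < ?Q * ?C" using lQC less_mult_imp_div_less[of l "?Q*?C" ?D] by simp
      then show ?thesis using D0 by (auto simp: div_eq_0_iff)
    qed
    finally show ?thesis .
  qed
  have s2e: "s2 $ l = (if l < ?C * ?D then yv $ l else 0)" if l: "l < ?N" for l
  proof -
    define q where "q = l div (?C * ?D)"
    define m where "m = l mod (?C * ?D)"
    have lqm: "l = q * (?C * ?D) + m" unfolding q_def m_def by (rule div_mult_mod_eq[symmetric])
    have q: "q < ?Q" unfolding q_def using l less_mult_imp_div_less[of l ?Q "?C*?D"] by simp
    have m: "m < ?C * ?D" unfolding m_def using D0 by simp
    have "s2 $ l = (\<Sum>m'<?C*?D. kron Ocr (1\<^sub>m ?D) $$ (m,m') * s3 $ (q*(?C*?D)+m'))"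
      unfolding lqm s2_def K2_def
      by (rule kron_one_left) (use Or s3c q m in auto)
    also have "\<dots> = (if l < ?C * ?D then yv $ l else 0)"
    proof (cases "q = 0")
      case False
      have "s3 $ (q*(?C*?D)+m') = 0" if "m' < ?C*?D" for m'
      proof -
        have "?D \<le> ?C * ?D" using D0 by simp
        also have "\<dots> \<le> q * (?C*?D)" using False by simp
        finally have ge: "?D \<le> q*(?C*?D)+m'" by linarith
        have "q*(?C*?D)+m' < ?N" by (rule idx_lt[OF q that])
        then show ?thesis using s3e ge by simp
      qed
      moreover have "\<not> l < ?C * ?D"
      proof -
        have "?C*?D \<le> q*(?C*?D)" using False by simp
        then show ?thesis using lqm by linarith
      qed
      ultimately show ?thesis by simp
    next
      case True
      define s3c' where "s3c' = vec (?C*?D) (\<lambda>m'. s3 $ m')"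
      define c where "c = m div ?D"
      define e where "e = m mod ?D"
      have mce: "m = c * ?D + e" unfolding c_def e_def by (rule div_mult_mod_eq[symmetric])
      have c: "c < ?C" unfolding c_def using m less_mult_imp_div_less[of m ?C ?D] by simp
      have e: "e < ?D" unfolding e_def using D0 by simp
      have "(\<Sum>m'<?C*?D. kron Ocr (1\<^sub>m ?D) $$ (m,m') * s3 $ (q*(?C*?D)+m'))
          = (kron Ocr (1\<^sub>m ?D) *\<^sub>v s3c') $ m"
        using True m Or by (simp add: mv_entry s3c'_def del: index_mult_mat_vec)
      also have "\<dots> = (\<Sum>c'<?C. Ocr $$ (c,c') * s3c' $ (c'*?D+e))"
        unfolding mce by (rule kron_one_right) (use Or c e in \<open>auto simp: s3c'_def\<close>)
      also have "\<dots> = (\<Sum>c'<?C. if c' = 0 then Ocr $$ (c,0) * U0 $$ (e,0) else 0)"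
      proof (intro sum.cong refl)
        fix c' assume "c' \<in> {..<?C}"
        then have c': "c' < ?C" by simp
        have lt: "c'*?D+e < ?C*?D" by (rule idx_lt[OF c' e])
        have "?C*?D \<le> ?N" by simp
        then have lt2: "c'*?D+e < ?N" using lt by linarith
        have "s3c' $ (c'*?D+e) = (if c'*?D+e < ?D then U0 $$ (c'*?D+e, 0) else 0)"
          unfolding s3c'_def using lt lt2 s3e by simp
        also have "\<dots> = (if c' = 0 then U0 $$ (e,0) else 0)"
        proof (cases "c' = 0")
          case False
          then have "?D \<le> c'*?D" by simp
          then have "\<not> (c'*?D+e < ?D)" by linarith
          then show ?thesis using False by simp
        qed (use e in simp)
        finally show "Ocr $$ (c,c') * s3c' $ (c'*?D+e) = (if c' = 0 then Ocr $$ (c,0) * U0 $$ (e,0) else 0)"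
          by simp
      qed
      also have "\<dots> = Ocr $$ (c,0) * U0 $$ (e,0)" using D0 by simp
      also have "\<dots> = (if l < ?C * ?D then yv $ l else 0)"
        using True lqm m by (simp add: yv_def c_def e_def)
      finally show ?thesis using True by simp
    qed
    finally show ?thesis .
  qed
  have s2eq: "s2 = ket0_I mQ (?C*?D) *\<^sub>v yv"
  proof (rule eq_vecI)
    fix l assume "l < dim_vec (ket0_I mQ (?C*?D) *\<^sub>v yv)"
    then have l: "l < ?N" by simp
    show "s2 $ l = (ket0_I mQ (?C*?D) *\<^sub>v yv) $ l"
      using s2e[OF l] ket0_mv[of yv "?C*?D" l mQ] l by (simp add: yv_def)
  qed (use s2c in simp)
  have "postsel (lcu_circuit mQ mc n UQ Ocl Ocr U0) (mc+mQ) (mc+mQ+n) $ i = (K1 *\<^sub>v s1) $ i"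
    unfolding ps by (rule bra0_mv) (use K1c N2 i in auto)
  also have "\<dots> = (K1 *\<^sub>v s1) $ (0 * (?C*?D) + i)" by simp
  also have "\<dots> = (\<Sum>m'<?C*?D. kron (adj Ocl) (1\<^sub>m ?D) $$ (i,m') * s1 $ (0*(?C*?D)+m'))"
    unfolding K1_def
    by (rule kron_one_left) (use Ol s1c i D0 in \<open>auto intro: less_le_trans\<close>)
  also have "\<dots> = (kron (adj Ocl) (1\<^sub>m ?D) *\<^sub>v vec (?C*?D) (\<lambda>m'. s1 $ m')) $ (0 * ?D + i)"
  proof -
    have dOl: "dim_row Ocl = ?C" "dim_col Ocl = ?C" using Ol by auto
    have "?D \<le> ?C*?D" by simp
    then have iCD: "i < ?C*?D" using i by linarith
    show ?thesis using dOl iCD by (simp add: mv_entry del: index_mult_mat_vec)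
  qed
  also have "\<dots> = (\<Sum>c<?C. adj Ocl $$ (0,c) * vec (?C*?D) (\<lambda>m'. s1 $ m') $ (c*?D+i))"
    by (rule kron_one_right) (use Ol i in auto)
  also have "\<dots> = (\<Sum>c<?C. cnj (Ocl $$ (c,0)) * s1 $ (c*?D+i))"
  proof (intro sum.cong refl)
    fix c assume "c \<in> {..<?C}"
    then have c: "c < ?C" by simp
    have "c*?D+i < ?C*?D" by (rule idx_lt[OF c i])
    then show "adj Ocl $$ (0,c) * vec (?C*?D) (\<lambda>m'. s1 $ m') $ (c*?D+i) = cnj (Ocl $$ (c,0)) * s1 $ (c*?D+i)"
      using Ol c by simp
  qed
  finally show ?thesis unfolding s1_def s2eq yv_def .
qed

lemma Bp_mv:
  fixes UQ :: "complex mat"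
  assumes UQ: "UQ \<in> carrier_mat (2^mQ * K) (2^mQ * K)" and z: "z \<in> carrier_vec K" and l: "l < K"
  shows "((bra0_I mQ K * UQ * ket0_I mQ K) *\<^sub>v z) $ l = (UQ *\<^sub>v (ket0_I mQ K *\<^sub>v z)) $ l"
proof -
  have b0: "bra0_I mQ K \<in> carrier_mat K (2^mQ * K)" by (intro carrier_matI bra0_dims)
  have k0: "ket0_I mQ K \<in> carrier_mat (2^mQ * K) K" by (intro carrier_matI ket0_dims)
  have "(bra0_I mQ K * UQ * ket0_I mQ K) *\<^sub>v z = (bra0_I mQ K * UQ) *\<^sub>v (ket0_I mQ K *\<^sub>v z)"
    by (rule assoc_mult_mat_vec[OF mult_carrier_mat[OF b0 UQ] k0 z])
  also have "\<dots> = bra0_I mQ K *\<^sub>v (UQ *\<^sub>v (ket0_I mQ K *\<^sub>v z))"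
    by (rule assoc_mult_mat_vec[OF b0 UQ mult_mat_vec_carrier[OF k0 z]])
  finally show ?thesis using bra0_mv[of "UQ *\<^sub>v (ket0_I mQ K *\<^sub>v z)" mQ K l] UQ l by simp
qed

lemma Q_mv:
  assumes A: "A \<in> carrier_mat (2^n) (2^n)" and M: "M \<le> 2^mc"
    and c: "c < 2^mc" and i: "i < 2^n"
  shows "(Qmat A t k M mc n *\<^sub>v vec (2^mc * 2^n) (\<lambda>l. y (l div 2^n) * w (l mod 2^n))) $ (c * 2^n + i)
    = (if c < M then y c * apl (evol A t (k c)) (2^n) w i else 0)"
proof -
  let ?D = "2^n :: nat" and ?C = "2^mc :: nat"
  have D0: "0 < ?D" by simp
  have ci: "c * ?D + i < ?C * ?D" by (rule idx_lt[OF c i])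
  have "(Qmat A t k M mc n *\<^sub>v vec (?C * ?D) (\<lambda>l. y (l div ?D) * w (l mod ?D))) $ (c * ?D + i)
      = (\<Sum>l<?C*?D. Qmat A t k M mc n $$ (c*?D+i, l) * (y (l div ?D) * w (l mod ?D)))"
    using ci by (simp add: mv_entry Qmat_dims del: index_mult_mat_vec)
  also have "\<dots> = (\<Sum>c'<?C. \<Sum>e<?D. Qmat A t k M mc n $$ (c*?D+i, c'*?D+e) * (y ((c'*?D+e) div ?D) * w ((c'*?D+e) mod ?D)))"
    by (rule sum_split)
  also have "\<dots> = (\<Sum>c'<?C. \<Sum>e<?D. if c' = c then (if c < M then evol A t (k c) $$ (i, e) * (y c * w e) else 0) else 0)"
  proof (intro sum.cong refl)
    fix c' e assume "c' \<in> {..<?C}" "e \<in> {..<?D}"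
    then have c': "c' < ?C" and e: "e < ?D" by auto
    have ce: "c'*?D+e < ?C*?D" by (rule idx_lt[OF c' e])
    show "Qmat A t k M mc n $$ (c*?D+i, c'*?D+e) * (y ((c'*?D+e) div ?D) * w ((c'*?D+e) mod ?D))
        = (if c' = c then (if c < M then evol A t (k c) $$ (i, e) * (y c * w e) else 0) else 0)"
      using Qmat_entry[OF A M ci ce] i e by auto
  qed
  also have "\<dots> = (if c < M then (\<Sum>e<?D. evol A t (k c) $$ (i, e) * (y c * w e)) else 0)"
  proof -
    have "(\<Sum>c'<?C. \<Sum>e<?D. if c' = c then (if c < M then evol A t (k c) $$ (i, e) * (y c * w e) else 0) else 0)
        = (\<Sum>c'<?C. if c' = c then (\<Sum>e<?D. if c < M then evol A t (k c) $$ (i, e) * (y c * w e) else 0) else 0)"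
      by (intro sum.cong refl) auto
    also have "\<dots> = (\<Sum>e<?D. if c < M then evol A t (k c) $$ (i, e) * (y c * w e) else 0)"
      using c by (subst sum.delta) auto
    also have "\<dots> = (if c < M then (\<Sum>e<?D. evol A t (k c) $$ (i, e) * (y c * w e)) else 0)"
      by auto
    finally show ?thesis .
  qed
  also have "\<dots> = (if c < M then y c * apl (evol A t (k c)) ?D w i else 0)"
    by (simp add: apl_def sum_distrib_left mult_ac)
  finally show ?thesis .
qed

lemma LCU_mv:
  assumes A: "A \<in> carrier_mat (2^n) (2^n)" and u0: "u0 \<in> carrier_vec (2^n)" and i: "i < 2^n"
  shows "(LCU A t k c n *\<^sub>v u0) $ i = (\<Sum>j<dim_vec c. c $ j * apl (evol A t (k j)) (2^n) (\<lambda>e. u0 $ e) i)"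
proof -
  have "(LCU A t k c n *\<^sub>v u0) $ i = (\<Sum>e<2^n. LCU A t k c n $$ (i,e) * u0 $ e)"
    using i u0 by (simp add: mv_entry LCU_dims del: index_mult_mat_vec)
  also have "\<dots> = (\<Sum>e<2^n. \<Sum>j<dim_vec c. c $ j * (evol A t (k j) $$ (i,e) * u0 $ e))"
    using i by (intro sum.cong refl) (simp add: LCU_entry[OF A] sum_distrib_left sum_distrib_right mult_ac)
  also have "\<dots> = (\<Sum>j<dim_vec c. \<Sum>e<2^n. c $ j * (evol A t (k j) $$ (i,e) * u0 $ e))"
    by (rule sum.swap)
  also have "\<dots> = (\<Sum>j<dim_vec c. c $ j * apl (evol A t (k j)) (2^n) (\<lambda>e. u0 $ e) i)"
    by (simp add: apl_def sum_distrib_left)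
  finally show ?thesis .
qed

lemma circuit_unitary:
  fixes UQ Ocl Ocr U0 :: "complex mat"
  assumes UQ: "UQ \<in> carrier_mat (2^mQ * (2^mc * 2^n)) (2^mQ * (2^mc * 2^n))" and uQ: "unitary_mat UQ"
    and Ol: "Ocl \<in> carrier_mat (2^mc) (2^mc)" and uOl: "unitary_mat Ocl"
    and Or: "Ocr \<in> carrier_mat (2^mc) (2^mc)" and uOr: "unitary_mat Ocr"
    and U0: "U0 \<in> carrier_mat (2^n) (2^n)" and u0: "unitary_mat U0"
  shows "lcu_circuit mQ mc n UQ Ocl Ocr U0 \<in> carrier_mat (2^(mc+mQ+n)) (2^(mc+mQ+n))
    \<and> unitary_mat (lcu_circuit mQ mc n UQ Ocl Ocr U0)"
proof -
  let ?D = "2^n :: nat" and ?C = "2^mc :: nat" and ?Q = "2^mQ :: nat"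
  let ?N = "?Q * (?C * ?D)"
  have N1: "2^(mc+mQ+n) = ?N" unfolding power_add by (simp add: mult_ac)
  have N3: "(?Q * ?C) * ?D = ?N" by (simp add: mult_ac)
  define K1 where "K1 = kron (1\<^sub>m ?Q) (kron (adj Ocl) (1\<^sub>m ?D))"
  define K2 where "K2 = kron (1\<^sub>m ?Q) (kron Ocr (1\<^sub>m ?D))"
  define K3 where "K3 = kron (1\<^sub>m (?Q * ?C)) U0"
  have uOl': "adj Ocl * Ocl = 1\<^sub>m ?C" using uOl Ol unfolding unitary_mat_def by auto
  have uOr': "adj Ocr * Ocr = 1\<^sub>m ?C" using uOr Or unfolding unitary_mat_def by auto
  have uU0': "adj U0 * U0 = 1\<^sub>m ?D" using u0 U0 unfolding unitary_mat_def by auto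
  have uQ': "adj UQ * UQ = 1\<^sub>m ?N" using uQ UQ unfolding unitary_mat_def by auto
  have aOl: "adj Ocl \<in> carrier_mat ?C ?C" using Ol by auto
  have K1c: "K1 \<in> carrier_mat ?N ?N" using Ol unfolding K1_def by auto
  have K2c: "K2 \<in> carrier_mat ?N ?N" using Or unfolding K2_def by auto
  have K3c': "K3 \<in> carrier_mat ((?Q * ?C) * ?D) ((?Q * ?C) * ?D)" using U0 unfolding K3_def by auto
  have K3c: "K3 \<in> carrier_mat ?N ?N" using K3c' unfolding N3 .
  have kc1: "kron (adj Ocl) (1\<^sub>m ?D) \<in> carrier_mat (?C*?D) (?C*?D)" using Ol by auto
  have kc2: "kron Ocr (1\<^sub>m ?D) \<in> carrier_mat (?C*?D) (?C*?D)" using Or by auto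
  have u1: "adj (kron (adj Ocl) (1\<^sub>m ?D)) * kron (adj Ocl) (1\<^sub>m ?D) = 1\<^sub>m (?C*?D)"
    by (rule unitary_kron[OF aOl one_carrier_mat unitary_adj[OF Ol uOl'] unitary_one])
  have u2: "adj (kron Ocr (1\<^sub>m ?D)) * kron Ocr (1\<^sub>m ?D) = 1\<^sub>m (?C*?D)"
    by (rule unitary_kron[OF Or one_carrier_mat uOr' unitary_one])
  have uK1: "adj K1 * K1 = 1\<^sub>m ?N" unfolding K1_def
    by (rule unitary_kron[OF one_carrier_mat kc1 unitary_one u1])
  have uK2: "adj K2 * K2 = 1\<^sub>m ?N" unfolding K2_def
    by (rule unitary_kron[OF one_carrier_mat kc2 unitary_one u2])
  have uK3': "adj K3 * K3 = 1\<^sub>m ((?Q * ?C) * ?D)" unfolding K3_def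
    by (rule unitary_kron[OF one_carrier_mat U0 unitary_one uU0'])
  have uK3: "adj K3 * K3 = 1\<^sub>m ?N" using uK3' unfolding N3 .
  have W: "lcu_circuit mQ mc n UQ Ocl Ocr U0 = K1 * UQ * K2 * K3"
    by (simp add: lcu_circuit_def K1_def K2_def K3_def)
  have c12: "K1 * UQ \<in> carrier_mat ?N ?N" by (rule mult_carrier_mat[OF K1c UQ])
  have c123: "K1 * UQ * K2 \<in> carrier_mat ?N ?N" by (rule mult_carrier_mat[OF c12 K2c])
  have Wc: "K1 * UQ * K2 * K3 \<in> carrier_mat ?N ?N" by (rule mult_carrier_mat[OF c123 K3c])
  have u12: "adj (K1 * UQ) * (K1 * UQ) = 1\<^sub>m ?N" by (rule unitary_mult[OF K1c UQ uK1 uQ'])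
  have u123: "adj (K1 * UQ * K2) * (K1 * UQ * K2) = 1\<^sub>m ?N" by (rule unitary_mult[OF c12 K2c u12 uK2])
  have uW: "adj (K1 * UQ * K2 * K3) * (K1 * UQ * K2 * K3) = 1\<^sub>m ?N" by (rule unitary_mult[OF c123 K3c u123 uK3])
  show ?thesis unfolding W N1 unitary_mat_def
  proof (intro conjI)
    show "K1 * UQ * K2 * K3 \<in> carrier_mat ?N ?N" by (rule Wc)
    show "dim_row (K1 * UQ * K2 * K3) = dim_col (K1 * UQ * K2 * K3)"
      by (simp only: carrier_matD[OF Wc])
    show "adj (K1 * UQ * K2 * K3) * (K1 * UQ * K2 * K3) = 1\<^sub>m (dim_row (K1 * UQ * K2 * K3))"
      by (simp only: carrier_matD(1)[OF Wc] uW)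
  qed
qed

lemma fn2_cong2: "D' = D \<Longrightarrow> (\<And>i. i < D \<Longrightarrow> f i = g i) \<Longrightarrow> fn2 D' f = fn2 D g"
  using fn2_cong by blast

lemma sum_lessThan_if:
  assumes "M \<le> (C::nat)"
  shows "(\<Sum>c<C. if c < M then f c else 0) = (\<Sum>c<M. (f c :: complex))"
proof -
  have "(\<Sum>c<C. if c < M then f c else 0) = sum f ({..<C} \<inter> {c. c < M})"
    by (simp add: sum.inter_restrict)
  also have "{..<C} \<inter> {c. c < M} = {..<M}" using assms by auto
  finally show ?thesis .
qed

lemma apl_lin: "apl E D (\<lambda>e. f e - a * g e) i = apl E D f i - a * apl E D g i"
  by (simp add: apl_def sum_subtractf sum_distrib_left algebra_simps)

lemma tens_norm:
  assumes y: "fn2 C y = 1" and v: "fn2 D v = 1"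
  shows "vnorm (vec (C*D) (\<lambda>l. y (l div D) * v (l mod D))) = 1"
proof -
  have sy: "(\<Sum>c<C. (cmod (y c))\<^sup>2) = 1" using y fn2_sq[of C y] by simp
  have sv: "(\<Sum>e<D. (cmod (v e))\<^sup>2) = 1" using v fn2_sq[of D v] by simp
  have "(\<Sum>l<C*D. (cmod (vec (C*D) (\<lambda>l. y (l div D) * v (l mod D)) $ l))\<^sup>2)
      = (\<Sum>c<C. \<Sum>e<D. (cmod (vec (C*D) (\<lambda>l. y (l div D) * v (l mod D)) $ (c*D+e)))\<^sup>2)"
    by (rule sum_split)
  also have "\<dots> = (\<Sum>c<C. \<Sum>e<D. (cmod (y c))\<^sup>2 * (cmod (v e))\<^sup>2)"
  proof (intro sum.cong refl)
    fix c e assume "c \<in> {..<C}" "e \<in> {..<D}"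
    then have c: "c < C" and e: "e < D" by auto
    have "c*D+e < C*D" by (rule idx_lt[OF c e])
    then show "(cmod (vec (C*D) (\<lambda>l. y (l div D) * v (l mod D)) $ (c*D+e)))\<^sup>2 = (cmod (y c))\<^sup>2 * (cmod (v e))\<^sup>2"
      using e by (simp add: norm_mult power_mult_distrib)
  qed
  also have "\<dots> = (\<Sum>c<C. (cmod (y c))\<^sup>2) * (\<Sum>e<D. (cmod (v e))\<^sup>2)"
    by (simp add: sum_product)
  also have "\<dots> = 1" using sy sv by simp
  finally show ?thesis unfolding vnorm_def by simp
qed

lemma cs_le_1:
  assumes M: "M \<le> C" and x: "fn2 C x = 1" and y: "fn2 C y = 1"
  shows "(\<Sum>j<M. cmod (x j) * cmod (y j)) \<le> 1"
proof -
  have "(\<Sum>j<M. cmod (x j) * cmod (y j)) = (\<Sum>j<M. \<bar>cmod (x j)\<bar> * \<bar>cmod (y j)\<bar>)" by simp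
  also have "\<dots> \<le> fn2 M x * fn2 M y" unfolding fn2_def by (rule L2_set_mult_ineq)
  also have "\<dots> \<le> fn2 C x * fn2 C y"
  proof (rule mult_mono)
    show "fn2 M x \<le> fn2 C x" unfolding fn2_def L2_set_def
      by (rule real_sqrt_le_mono, rule sum_mono2) (use M in auto)
    show "fn2 M y \<le> fn2 C y" unfolding fn2_def L2_set_def
      by (rule real_sqrt_le_mono, rule sum_mono2) (use M in auto)
  qed auto
  finally show ?thesis using x y by simp
qed

theorem lemma6:
  fixes n M mc mQ :: nat
    and A UQ Ocl Ocr U0 :: "complex mat"
    and t \<epsilon>v \<epsilon>Q \<epsilon>c \<epsilon>0 \<epsilon> :: real
    and u0 c :: "complex vec"
    and k :: "nat \<Rightarrow> real"
  assumes A: "A \<in> carrier_mat (2^n) (2^n)"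
    and t: "t > 0"
    and u0: "u0 \<in> carrier_vec (2^n)"
    and c: "dim_vec c = M"
    and ev: "\<epsilon>v \<ge> vnorm (mexp ((- complex_of_real t) \<cdot>\<^sub>m A) *\<^sub>v u0 - LCU A t k c n *\<^sub>v u0)"
    and UQ: "block_encoding UQ 1 mQ \<epsilon>Q (Qmat A t k M mc n)"
    and Oc: "state_prep_pair Ocl Ocr (vnorm1 c) mc \<epsilon>c c"
    and U0: "vec_block_encoding U0 (vnorm u0) 0 n \<epsilon>0 u0"
    and err: "\<epsilon>v + vnorm u0 * (\<epsilon>c + vnorm1 c * \<epsilon>Q) + vnorm1 c * \<epsilon>0 \<le> \<epsilon>"
  shows "vec_block_encoding (lcu_circuit mQ mc n UQ Ocl Ocr U0) (vnorm1 c * vnorm u0)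
           (mc + mQ) (mc + mQ + n) \<epsilon> (mexp ((- complex_of_real t) \<cdot>\<^sub>m A) *\<^sub>v u0)
       \<and> (let \<epsilon>' = \<epsilon>v + vnorm u0 * (\<epsilon>c + vnorm1 c * \<epsilon>Q) + vnorm1 c * \<epsilon>0;
              ut = mexp ((- complex_of_real t) \<cdot>\<^sub>m A) *\<^sub>v u0 in
          \<epsilon>' \<le> vnorm ut \<longrightarrow>
          success_prob (lcu_circuit mQ mc n UQ Ocl Ocr U0) (mc + mQ) (mc + mQ + n)
            \<ge> (vnorm ut - \<epsilon>')\<^sup>2 / ((vnorm u0)\<^sup>2 * (vnorm1 c)\<^sup>2))"
proof -
  let ?D = "2^n :: nat" and ?C = "2^mc :: nat" and ?Q = "2^mQ :: nat"
  define \<gamma> where "\<gamma> = vnorm1 c"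
  define nu where "nu = vnorm u0"
  define ut where "ut = mexp ((- complex_of_real t) \<cdot>\<^sub>m A) *\<^sub>v u0"
  define W where "W = lcu_circuit mQ mc n UQ Ocl Ocr U0"
  define p where "p = postsel W (mc + mQ) (mc + mQ + n)"
  define x where "x = (\<lambda>c. Ocl $$ (c,0))"
  define y where "y = (\<lambda>c. Ocr $$ (c,0))"
  define v where "v = (\<lambda>e. U0 $$ (e,0))"
  define E where "E = (\<lambda>j. evol A t (k j))"
  define Q where "Q = Qmat A t k M mc n"
  define Bp where "Bp = bra0_I mQ (?C*?D) * UQ * ket0_I mQ (?C*?D)"
  define yv where "yv = vec (?C*?D) (\<lambda>l. y (l div ?D) * v (l mod ?D))"
  define ucf where "ucf = (\<lambda>e. u0 $ e)"
  define w where "w = (\<lambda>e. u0 $ e - complex_of_real nu * v e)"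
  define L where "L = (\<lambda>i. (LCU A t k c n *\<^sub>v u0) $ i)"
  define \<epsilon>' where "\<epsilon>' = \<epsilon>v + vnorm u0 * (\<epsilon>c + vnorm1 c * \<epsilon>Q) + vnorm1 c * \<epsilon>0"
  have D0: "0 < ?D" "0 < ?C" by auto
  have \<gamma>0: "0 \<le> \<gamma>" unfolding \<gamma>_def vnorm1_def by (intro sum_nonneg) auto
  have nu0: "0 \<le> nu" unfolding nu_def vnorm_fn2 by simp
  have dA: "dim_row A = ?D" "dim_col A = ?D" using A by auto
  have du0: "dim_vec u0 = ?D" using u0 by auto
  have QD: "dim_row Q = ?C * ?D" "dim_col Q = ?C * ?D" unfolding Q_def by (simp_all add: Qmat_dims)
  have UQc: "UQ \<in> carrier_mat (?Q * (?C * ?D)) (?Q * (?C * ?D))"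
    and uUQ: "unitary_mat UQ"
    and opQ: "opnorm (complex_of_real 1 \<cdot>\<^sub>m Bp - Q) \<le> \<epsilon>Q"
    using UQ unfolding block_encoding_def Q_def[symmetric] Bp_def QD by auto
  have MC: "M \<le> ?C" and Olc: "Ocl \<in> carrier_mat ?C ?C" and Orc: "Ocr \<in> carrier_mat ?C ?C"
    and uOl: "unitary_mat Ocl" and uOr: "unitary_mat Ocr"
    and spp: "(\<Sum>j<M. cmod (complex_of_real \<gamma> * cnj ((Ocl *\<^sub>v ket0v mc) $ j) * (Ocr *\<^sub>v ket0v mc) $ j - c $ j)) \<le> \<epsilon>c"
    using Oc c unfolding state_prep_pair_def \<gamma>_def Let_def by auto
  have U0c: "U0 \<in> carrier_mat ?D ?D" and uU0: "unitary_mat U0"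
    and e0b: "vnorm (u0 - complex_of_real nu \<cdot>\<^sub>v postsel U0 0 n) \<le> \<epsilon>0"
    using U0 unfolding vec_block_encoding_def nu_def by auto
  have uOl': "adj Ocl * Ocl = 1\<^sub>m ?C" using uOl Olc unfolding unitary_mat_def by auto
  have uOr': "adj Ocr * Ocr = 1\<^sub>m ?C" using uOr Orc unfolding unitary_mat_def by auto
  have uU0': "adj U0 * U0 = 1\<^sub>m ?D" using uU0 U0c unfolding unitary_mat_def by auto
  have nx: "fn2 ?C x = 1" unfolding x_def by (rule col_norm[OF Olc uOl']) simp
  have ny: "fn2 ?C y = 1" unfolding y_def by (rule col_norm[OF Orc uOr']) simp
  have nv: "fn2 ?D v = 1" unfolding v_def by (rule col_norm[OF U0c uU0']) simp
  have nyv: "vnorm yv = 1" unfolding yv_def by (rule tens_norm[OF ny nv])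
  have nucf: "fn2 ?D ucf = nu" unfolding nu_def ucf_def vnorm_fn2 du0 ..
  have nE: "fn2 ?D (apl (E j) ?D f) = fn2 ?D f" for j f
    unfolding E_def by (rule fn2_unitary[OF evol_carrier[OF A] evol_unitary[OF A]])
  have cs: "(\<Sum>j<M. cmod (x j) * cmod (y j)) \<le> 1" by (rule cs_le_1[OF MC nx ny])
  have F5: "(\<Sum>j<M. cmod (c $ j - complex_of_real \<gamma> * cnj (x j) * y j)) \<le> \<epsilon>c"
  proof -
    have "(\<Sum>j<M. cmod (c $ j - complex_of_real \<gamma> * cnj (x j) * y j))
        = (\<Sum>j<M. cmod (complex_of_real \<gamma> * cnj ((Ocl *\<^sub>v ket0v mc) $ j) * (Ocr *\<^sub>v ket0v mc) $ j - c $ j))"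
    proof (intro sum.cong refl)
      fix j assume "j \<in> {..<M}"
      then have j: "j < ?C" using MC by auto
      have "(Ocl *\<^sub>v ket0v mc) $ j = x j" unfolding ket0v_def x_def by (rule unit_mv[OF Olc j])
      moreover have "(Ocr *\<^sub>v ket0v mc) $ j = y j" unfolding ket0v_def y_def by (rule unit_mv[OF Orc j])
      ultimately show "cmod (c $ j - complex_of_real \<gamma> * cnj (x j) * y j)
          = cmod (complex_of_real \<gamma> * cnj ((Ocl *\<^sub>v ket0v mc) $ j) * (Ocr *\<^sub>v ket0v mc) $ j - c $ j)"
        by (simp add: norm_minus_commute)
    qed
    then show ?thesis using spp by simp
  qed
  have F6: "fn2 ?D w \<le> \<epsilon>0"
  proof -
    have ps0: "postsel U0 0 n $ e = v e" if e: "e < ?D" for e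
    proof -
      have "postsel U0 0 n = bra0_I 0 ?D *\<^sub>v (U0 *\<^sub>v unit_vec ?D 0)"
        unfolding postsel_def ket0v_def diff_zero
        by (rule assoc_mult_mat_vec[of _ ?D ?D _ ?D]) (use U0c in \<open>auto intro!: carrier_matI\<close>)
      then have "postsel U0 0 n $ e = (U0 *\<^sub>v unit_vec ?D 0) $ e"
        using bra0_mv[of "U0 *\<^sub>v unit_vec ?D 0" 0 ?D e] e U0c by simp
      also have "\<dots> = v e" unfolding v_def by (rule unit_mv[OF U0c e])
      finally show ?thesis .
    qed
    have dps: "dim_vec (postsel U0 0 n) = ?D" by (simp add: postsel_def)
    have "vnorm (u0 - complex_of_real nu \<cdot>\<^sub>v postsel U0 0 n) = fn2 ?D w"
      unfolding vnorm_fn2 w_def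
      by (simp add: dps, rule fn2_cong) (simp add: dps ps0)
    then show ?thesis using e0b by simp
  qed
  have dut: "dim_vec ut = ?D" unfolding ut_def using dA by simp
  have dp: "dim_vec p = ?D" unfolding p_def postsel_def by simp
  have F1: "p $ i = (\<Sum>c<?C. cnj (x c) * (Bp *\<^sub>v yv) $ (c*?D+i))" if i: "i < ?D" for i
  proof -
    have "p $ i = (\<Sum>c<?C. cnj (Ocl $$ (c,0)) * (UQ *\<^sub>v (ket0_I mQ (?C*?D) *\<^sub>v
         vec (?C*?D) (\<lambda>l. Ocr $$ (l div ?D, 0) * U0 $$ (l mod ?D, 0)))) $ (c*?D+i))"
      unfolding p_def W_def by (rule circuit_postsel[OF UQc Olc Orc U0c i])
    also have "\<dots> = (\<Sum>c<?C. cnj (x c) * (Bp *\<^sub>v yv) $ (c*?D+i))"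
    proof (intro sum.cong refl)
      fix c assume "c \<in> {..<?C}"
      then have cC: "c < ?C" by simp
      have ci: "c*?D+i < ?C*?D" by (rule idx_lt[OF cC i])
      have yvc: "yv \<in> carrier_vec (?C*?D)" unfolding yv_def by simp
      have "(Bp *\<^sub>v yv) $ (c*?D+i) = (UQ *\<^sub>v (ket0_I mQ (?C*?D) *\<^sub>v yv)) $ (c*?D+i)"
        unfolding Bp_def by (rule Bp_mv[OF UQc yvc ci])
      then show "cnj (Ocl $$ (c,0)) * (UQ *\<^sub>v (ket0_I mQ (?C*?D) *\<^sub>v
         vec (?C*?D) (\<lambda>l. Ocr $$ (l div ?D, 0) * U0 $$ (l mod ?D, 0)))) $ (c*?D+i)
         = cnj (x c) * (Bp *\<^sub>v yv) $ (c*?D+i)"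
        by (simp add: x_def yv_def y_def v_def)
    qed
    finally show ?thesis .
  qed
  define Sv where "Sv = (\<lambda>i. \<Sum>j<M. cnj (x j) * y j * apl (E j) ?D v i)"
  define Su where "Su = (\<lambda>i. \<Sum>j<M. cnj (x j) * y j * apl (E j) ?D ucf i)"
  have F2: "(\<Sum>c<?C. cnj (x c) * (Q *\<^sub>v yv) $ (c*?D+i)) = Sv i" if i: "i < ?D" for i
  proof -
    have "(\<Sum>c<?C. cnj (x c) * (Q *\<^sub>v yv) $ (c*?D+i))
        = (\<Sum>c<?C. if c < M then cnj (x c) * y c * apl (E c) ?D v i else 0)"
    proof (intro sum.cong refl)
      fix c assume "c \<in> {..<?C}"
      then have cC: "c < ?C" by simp
      show "cnj (x c) * (Q *\<^sub>v yv) $ (c*?D+i) = (if c < M then cnj (x c) * y c * apl (E c) ?D v i else 0)"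
        unfolding Q_def yv_def E_def using Q_mv[OF A MC cC i, of t k y v] by (simp add: mult.assoc)
    qed
    also have "\<dots> = Sv i" unfolding Sv_def by (rule sum_lessThan_if[OF MC])
    finally show ?thesis .
  qed
  have F3: "L i = (\<Sum>j<M. c $ j * apl (E j) ?D ucf i)" if i: "i < ?D" for i
    unfolding L_def E_def ucf_def using LCU_mv[OF A u0 i, of t k c] c by simp
  have F4: "fn2 ?D (\<lambda>i. ut $ i - L i) \<le> \<epsilon>v"
  proof -
    have dL: "dim_vec (LCU A t k c n *\<^sub>v u0) = ?D" by (simp add: LCU_dims)
    have "vnorm (ut - LCU A t k c n *\<^sub>v u0) = fn2 ?D (\<lambda>i. ut $ i - L i)"
      unfolding vnorm_fn2 L_def by (rule fn2_cong2) (simp_all add: dL dut LCU_dims)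
    then show ?thesis using ev unfolding ut_def by simp
  qed
  have F7: "fn2 (?C*?D) (\<lambda>l. (Q *\<^sub>v yv) $ l - (Bp *\<^sub>v yv) $ l) \<le> \<epsilon>Q"
  proof -
    define Mx where "Mx = complex_of_real 1 \<cdot>\<^sub>m Bp - Q"
    have dBp: "dim_row Bp = ?C*?D" "dim_col Bp = ?C*?D" unfolding Bp_def by simp_all
    have dyv: "dim_vec yv = ?C*?D" unfolding yv_def by simp
    have dMx: "dim_row Mx = ?C*?D" "dim_col Mx = ?C*?D" unfolding Mx_def using QD by simp_all
    have Mxe: "(Mx *\<^sub>v yv) $ l = (Bp *\<^sub>v yv) $ l - (Q *\<^sub>v yv) $ l" if l: "l < ?C*?D" for l
    proof -
      have "(Mx *\<^sub>v yv) $ l = (\<Sum>j<?C*?D. Mx $$ (l,j) * yv $ j)"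
        using l dMx dyv by (simp add: mv_entry del: index_mult_mat_vec)
      also have "\<dots> = (\<Sum>j<?C*?D. Bp $$ (l,j) * yv $ j - Q $$ (l,j) * yv $ j)"
        using l dBp QD by (intro sum.cong refl) (simp add: Mx_def algebra_simps)
      also have "\<dots> = (Bp *\<^sub>v yv) $ l - (Q *\<^sub>v yv) $ l"
        using l dBp QD dyv by (simp add: mv_entry sum_subtractf del: index_mult_mat_vec)
      finally show ?thesis .
    qed
    have "vnorm (Mx *\<^sub>v yv) \<le> opnorm Mx * vnorm yv" by (rule opnorm_bound) (simp add: dMx dyv)
    also have "\<dots> \<le> \<epsilon>Q" using opQ nyv unfolding Mx_def by simp
    finally have "vnorm (Mx *\<^sub>v yv) \<le> \<epsilon>Q" .
    moreover have "vnorm (Mx *\<^sub>v yv) = fn2 (?C*?D) (\<lambda>l. (Bp *\<^sub>v yv) $ l - (Q *\<^sub>v yv) $ l)"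
      unfolding vnorm_fn2 by (rule fn2_cong2) (simp_all add: dMx Mxe del: index_mult_mat_vec)
    ultimately show ?thesis using fn2_minus_commute by metis
  qed
  define T1 where "T1 = (\<lambda>i. ut $ i - L i)"
  define T2 where "T2 = (\<lambda>i. \<Sum>j<M. (c $ j - complex_of_real \<gamma> * cnj (x j) * y j) * apl (E j) ?D ucf i)"
  define T3 where "T3 = (\<lambda>i. complex_of_real \<gamma> * (\<Sum>j<M. (cnj (x j) * y j) * apl (E j) ?D w i))"
  define T4 where "T4 = (\<lambda>i. complex_of_real (\<gamma> * nu) * (\<Sum>c<?C. cnj (x c) * ((Q *\<^sub>v yv) $ (c*?D+i) - (Bp *\<^sub>v yv) $ (c*?D+i))))"
  have key: "ut $ i - complex_of_real (\<gamma> * nu) * p $ i = T1 i + (T2 i + (T3 i + T4 i))" if i: "i < ?D" for i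
  proof -
    have e2: "T2 i = L i - complex_of_real \<gamma> * Su i"
      unfolding T2_def Su_def F3[OF i]
      by (simp only: right_diff_distrib sum_distrib_left sum_subtractf[symmetric]) (intro sum.cong refl; simp add: algebra_simps)
    have e3: "T3 i = complex_of_real \<gamma> * (Su i - complex_of_real nu * Sv i)"
      unfolding T3_def Su_def Sv_def w_def apl_lin
      by (simp only: right_diff_distrib sum_distrib_left sum_subtractf[symmetric]) (intro sum.cong refl; simp add: algebra_simps ucf_def)
    have e4: "T4 i = complex_of_real (\<gamma> * nu) * (Sv i - p $ i)"
    proof -
      have "(\<Sum>c<?C. cnj (x c) * ((Q *\<^sub>v yv) $ (c*?D+i) - (Bp *\<^sub>v yv) $ (c*?D+i)))
          = (\<Sum>c<?C. cnj (x c) * (Q *\<^sub>v yv) $ (c*?D+i)) - (\<Sum>c<?C. cnj (x c) * (Bp *\<^sub>v yv) $ (c*?D+i))"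
        by (simp add: right_diff_distrib sum_subtractf)
      also have "\<dots> = Sv i - p $ i" using F2[OF i] F1[OF i] by simp
      finally show ?thesis unfolding T4_def by simp
    qed
    show ?thesis unfolding e2 e3 e4 T1_def by (simp add: algebra_simps)
  qed
  have b2: "fn2 ?D T2 \<le> \<epsilon>c * nu"
  proof -
    have "fn2 ?D T2 \<le> (\<Sum>j<M. fn2 ?D (\<lambda>i. (c $ j - complex_of_real \<gamma> * cnj (x j) * y j) * apl (E j) ?D ucf i))"
      unfolding T2_def by (rule fn2_sum) simp
    also have "\<dots> = (\<Sum>j<M. cmod (c $ j - complex_of_real \<gamma> * cnj (x j) * y j)) * nu"
      by (simp add: fn2_scale nE nucf sum_distrib_right)
    also have "\<dots> \<le> \<epsilon>c * nu" by (rule mult_right_mono[OF F5 nu0])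
    finally show ?thesis .
  qed
  have b3: "fn2 ?D T3 \<le> \<gamma> * \<epsilon>0"
  proof -
    have "fn2 ?D T3 = \<gamma> * fn2 ?D (\<lambda>i. \<Sum>j<M. (cnj (x j) * y j) * apl (E j) ?D w i)"
      unfolding T3_def fn2_scale using \<gamma>0 by simp
    also have "\<dots> \<le> \<gamma> * (\<Sum>j<M. fn2 ?D (\<lambda>i. (cnj (x j) * y j) * apl (E j) ?D w i))"
      by (rule mult_left_mono[OF fn2_sum \<gamma>0]) simp
    also have "\<dots> = \<gamma> * ((\<Sum>j<M. cmod (x j) * cmod (y j)) * fn2 ?D w)"
      by (simp add: fn2_scale nE norm_mult sum_distrib_right)
    also have "\<dots> \<le> \<gamma> * (1 * \<epsilon>0)"
      by (intro mult_left_mono mult_mono cs F6 \<gamma>0) (auto intro: sum_nonneg)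
    finally show ?thesis by simp
  qed
  have b4: "fn2 ?D T4 \<le> \<gamma> * nu * \<epsilon>Q"
  proof -
    have "fn2 ?D T4 = \<gamma> * nu * fn2 ?D (\<lambda>i. \<Sum>c<?C. cnj (x c) * ((Q *\<^sub>v yv) $ (c*?D+i) - (Bp *\<^sub>v yv) $ (c*?D+i)))"
      unfolding T4_def fn2_scale using \<gamma>0 nu0 by (simp add: norm_mult)
    also have "\<dots> \<le> \<gamma> * nu * (fn2 ?C (\<lambda>c. cnj (x c)) * fn2 (?C*?D) (\<lambda>l. (Q *\<^sub>v yv) $ l - (Bp *\<^sub>v yv) $ l))"
      by (rule mult_left_mono[OF fn2_contract]) (use \<gamma>0 nu0 in simp)
    also have "fn2 ?C (\<lambda>c. cnj (x c)) = 1" using nx unfolding fn2_def by simp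
    also have "\<gamma> * nu * (1 * fn2 (?C*?D) (\<lambda>l. (Q *\<^sub>v yv) $ l - (Bp *\<^sub>v yv) $ l)) \<le> \<gamma> * nu * \<epsilon>Q"
      using F7 \<gamma>0 nu0 by (simp add: mult_left_mono)
    finally show ?thesis .
  qed
  have main: "fn2 ?D (\<lambda>i. ut $ i - complex_of_real (\<gamma> * nu) * p $ i) \<le> \<epsilon>'"
  proof -
    have "fn2 ?D (\<lambda>i. ut $ i - complex_of_real (\<gamma> * nu) * p $ i) = fn2 ?D (\<lambda>i. T1 i + (T2 i + (T3 i + T4 i)))"
      by (rule fn2_cong) (rule key)
    also have "\<dots> \<le> fn2 ?D T1 + fn2 ?D (\<lambda>i. T2 i + (T3 i + T4 i))" by (rule fn2_add)
    also have "fn2 ?D (\<lambda>i. T2 i + (T3 i + T4 i)) \<le> fn2 ?D T2 + fn2 ?D (\<lambda>i. T3 i + T4 i)" by (rule fn2_add)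
    also have "fn2 ?D (\<lambda>i. T3 i + T4 i) \<le> fn2 ?D T3 + fn2 ?D T4" by (rule fn2_add)
    finally have "fn2 ?D (\<lambda>i. ut $ i - complex_of_real (\<gamma> * nu) * p $ i) \<le> fn2 ?D T1 + (fn2 ?D T2 + (fn2 ?D T3 + fn2 ?D T4))"
      by simp
    also have "\<dots> \<le> \<epsilon>v + (\<epsilon>c * nu + (\<gamma> * \<epsilon>0 + \<gamma> * nu * \<epsilon>Q))"
      using F4 b2 b3 b4 unfolding T1_def by linarith
    also have "\<dots> = \<epsilon>'" unfolding \<epsilon>'_def \<gamma>_def nu_def by (simp add: algebra_simps)
    finally show ?thesis .
  qed
  have circ: "W \<in> carrier_mat (2^(mc+mQ+n)) (2^(mc+mQ+n)) \<and> unitary_mat W"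
    unfolding W_def by (rule circuit_unitary[OF UQc uUQ Olc uOl Orc uOr U0c uU0])
  have vb: "vnorm (ut - complex_of_real (\<gamma> * nu) \<cdot>\<^sub>v p) = fn2 ?D (\<lambda>i. ut $ i - complex_of_real (\<gamma> * nu) * p $ i)"
    unfolding vnorm_fn2 by (rule fn2_cong2) (simp_all add: dp dut)
  have e'e: "\<epsilon>' \<le> \<epsilon>" using err unfolding \<epsilon>'_def .
  have part1: "vec_block_encoding W (vnorm1 c * vnorm u0) (mc + mQ) (mc + mQ + n) \<epsilon> ut"
    unfolding vec_block_encoding_def p_def[symmetric] \<gamma>_def[symmetric] nu_def[symmetric]
    using circ dut vb main e'e by simp
  have tri: "vnorm ut \<le> \<epsilon>' + \<gamma> * nu * vnorm p"
  proof -
    have "vnorm ut = fn2 ?D (\<lambda>i. (ut $ i - complex_of_real (\<gamma> * nu) * p $ i) + complex_of_real (\<gamma> * nu) * p $ i)"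
      unfolding vnorm_fn2 by (rule fn2_cong2) (simp_all add: dut)
    also have "\<dots> \<le> fn2 ?D (\<lambda>i. ut $ i - complex_of_real (\<gamma> * nu) * p $ i) + fn2 ?D (\<lambda>i. complex_of_real (\<gamma> * nu) * p $ i)"
      by (rule fn2_add)
    also have "fn2 ?D (\<lambda>i. complex_of_real (\<gamma> * nu) * p $ i) = \<gamma> * nu * vnorm p"
      unfolding fn2_scale vnorm_fn2 dp using \<gamma>0 nu0 by (simp add: norm_mult)
    finally show ?thesis using main by linarith
  qed
  have part2: "\<epsilon>' \<le> vnorm ut \<longrightarrow> success_prob W (mc + mQ) (mc + mQ + n) \<ge> (vnorm ut - \<epsilon>')\<^sup>2 / ((vnorm u0)\<^sup>2 * (vnorm1 c)\<^sup>2)"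
  proof
    assume h: "\<epsilon>' \<le> vnorm ut"
    have sp: "success_prob W (mc + mQ) (mc + mQ + n) = (vnorm p)\<^sup>2" unfolding success_prob_def p_def ..
    have den: "(vnorm u0)\<^sup>2 * (vnorm1 c)\<^sup>2 = (\<gamma> * nu)\<^sup>2" unfolding \<gamma>_def nu_def by (simp add: power_mult_distrib)
    show "success_prob W (mc + mQ) (mc + mQ + n) \<ge> (vnorm ut - \<epsilon>')\<^sup>2 / ((vnorm u0)\<^sup>2 * (vnorm1 c)\<^sup>2)"
    proof (cases "\<gamma> * nu = 0")
      case True
      then have z: "(\<gamma> * nu)\<^sup>2 = 0" by simp
      show ?thesis unfolding sp den z by simp
    next
      case False
      then have pos: "0 < \<gamma> * nu" using \<gamma>0 nu0 by (simp add: less_le)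
      have a0: "0 \<le> vnorm ut - \<epsilon>'" using h by simp
      have "(vnorm ut - \<epsilon>')\<^sup>2 \<le> (\<gamma> * nu * vnorm p)\<^sup>2"
        by (rule power_mono) (use tri a0 in linarith)+
      also have "\<dots> = (vnorm p)\<^sup>2 * (\<gamma> * nu)\<^sup>2" by (simp add: power_mult_distrib)
      finally have sq: "(vnorm ut - \<epsilon>')\<^sup>2 \<le> (vnorm p)\<^sup>2 * (\<gamma> * nu)\<^sup>2" .
      have p2: "0 < (\<gamma> * nu)\<^sup>2" by (rule zero_less_power[OF pos])
      have "(vnorm ut - \<epsilon>')\<^sup>2 / (\<gamma> * nu)\<^sup>2 \<le> (vnorm p)\<^sup>2"
        using sq by (simp only: pos_divide_le_eq[OF p2])
      then show ?thesis unfolding sp den by simp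
    qed
  qed
  show ?thesis
    using part1 part2 unfolding Let_def ut_def[symmetric] W_def[symmetric] \<epsilon>'_def[symmetric] by simp
qed


end
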